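(* For any $w, w' \in \mathcal{C}\langle A \rangle$ and any integer $M \ge 1$, \[ Z^{\mathcal{S}, \mathrm{sh}}_{q, M}(w \,\mathrm{sh}_{\hbar}\, w')=Z^{\mathcal{S}, \mathrm{sh}}_{q, M}\bigl(w \, \psi^{\mathrm{sh}}(w')\bigr), \] where $w\,\psi^{\mathrm{sh}}(w')$ denotes the concatenation product in $\mathcal{C}\langle A\rangle$.
   Context: Let $\mathcal{C}=\mathbb{Q}[\hbar]$ with $\hbar$ a formal variable, and let $\mathfrak{H}=\mathcal{C}\langle a,b\rangle$ be the non-commutative polynomial ring in $a,b$ over $\mathcal{C}$. For $k\ge 1$ put $g_k=ba^k$. Let $A=\{\hbar b\}\cup\{ba^k\mid k\ge 1\}$, let $\mathcal{C}\langle A\rangle$ be the $\mathcal{C}$-subalgebra of $\mathfrak{H}$ generated by $1$ and $A$, and let $\mathfrak{z}$ be the $\mathcal{C}$-span of $A$. Fix $q\in\mathbb{C}$ with $0<|q|<1$ and regard $\mathbb{C}$ as a $\mathcal{C}$-module with $\hbar$ acting as multiplication by $1-q$. Let $[m]=(1-q^m)/(1-q)$. For $m\ge 1$ let $F_q(m;\cdot):\mathfrak{z}\to\mathbb{C}$ be the $\mathcal{C}$-linear map with $F_q(m;\hbar b)=1-q$ and $F_q(m;g_k)=q^{km}/[m]^k$ for $k\ge1$. For $M\ge 1$ let $Z_{q,M}:\mathcal{C}\langle A\rangle\to\mathbb{C}$ be the $\mathcal{C}$-linear map with $Z_{q,M}(1)=1$ and $Z_{q,M}(u_1\cdots u_r)=\sum_{0<m_1<\cdots<m_r<M}\prod_{i=1}^r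 F_q(m_i;u_i)$ for $u_1,\dots,u_r\in A$. The shuffle product $\mathrm{sh}_\hbar$ on $\mathfrak{H}$ (written infix) is the $\mathcal{C}$-bilinear product determined by $w\,\mathrm{sh}_\hbar\,1=1\,\mathrm{sh}_\hbar\,w=w$, $wa\,\mathrm{sh}_\hbar\,w'a=(wa\,\mathrm{sh}_\hbar\,w'+w\,\mathrm{sh}_\hbar\,w'a+\hbar\,(w\,\mathrm{sh}_\hbar\,w'))a$ and $wb\,\mathrm{sh}_\hbar\,w'=w\,\mathrm{sh}_\hbar\,w'b=(w\,\mathrm{sh}_\hbar\,w')b$ for all $w,w'\in\mathfrak{H}$; $\mathcal{C}\langle A\rangle$ is closed under it. Let $\psi^{\mathrm{sh}}$ be the $\mathcal{C}$-algebra anti-involution of $\mathcal{C}\langle A\rangle$ with $\psi^{\mathrm{sh}}(\hbar b)=\hbar b$ and $\psi^{\mathrm{sh}}(ba^k)=b(-a-\hbar)^k$ for $k\ge1$. Define the $\mathcal{C}$-linear map $w^{\mathcal{S},\mathrm{sh}}_\hbar:\mathcal{C}\langle A\rangle\to\mathcal{C}\langle A\rangle$ by $w^{\mathcal{S},\mathrm{sh}}_\hbar(1)=1$ and $w^{\mathcal{S},\mathrm{sh}}_\hbar(u_1\cdots u_r)=\sum_{i=0}^r (u_1\cdots u_i)\,\mathrm{sh}_\hbar\, \psi^{\mathrm{sh}}(u_{i+1}\cdots u_r)$ for $r\ge1$, $u_1,\dots,u_r\in A$, and set $Z^{\mathcal{S},\mathrm{sh}}_{q,M}=Z_{q,M}\circ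 w^{\mathcal{S},\mathrm{sh}}_\hbar$. *)

theory Defs
  imports Complex_Main "HOL-Computational_Algebra.Polynomial"
begin

datatype letter = La | Lb

text \<open>Elements of H are coefficient functions on words in a,b (only finitely
supported ones arise); coefficients lie in C = Q[hbar] = rat poly.\<close>
type_synonym H = "letter list \<Rightarrow> rat poly"

definition hbar :: "rat poly" where "hbar = [:0, 1:]"

definition monoH :: "letter list \<Rightarrow> H" where
  "monoH u = (\<lambda>t. if t = u then 1 else 0)"

definition suppH :: "H \<Rightarrow> letter list set" where
  "suppH x = {u. x u \<noteq> 0}"

definition addH :: "H \<Rightarrow> H \<Rightarrow> H" where
  "addH x y = (\<lambda>t. x t + y t)"

definition scaleH :: "rat poly \<Rightarrow> H \<Rightarrow> H" where
  "scaleH c x = (\<lambda>t. c * x t)"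

definition bilH :: "(letter list \<Rightarrow> letter list \<Rightarrow> H) \<Rightarrow> H \<Rightarrow> H \<Rightarrow> H" where
  "bilH f x y = (\<lambda>t. \<Sum>u\<in>suppH x. \<Sum>v\<in>suppH y. x u * y v * f u v t)"

definition concH :: "H \<Rightarrow> H \<Rightarrow> H" where
  "concH = bilH (\<lambda>u v. monoH (u @ v))"

definition appH :: "H \<Rightarrow> letter \<Rightarrow> H" where
  "appH x l = (\<lambda>t. if t \<noteq> [] \<and> last t = l then x (butlast t) else 0)"

text \<open>shr works on reversed words (head = last letter), result in normal orientation.\<close>
function (sequential) shr :: "letter list \<Rightarrow> letter list \<Rightarrow> H" where
  "shr [] v = monoH (rev v)"
| "shr u [] = monoH (rev u)"
| "shr (Lb # u) v = appH (shr u v) Lb"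
| "shr u (Lb # v) = appH (shr u v) Lb"
| "shr (La # u) (La # v) =
     appH (addH (addH (shr (La # u) v) (shr u (La # v))) (scaleH hbar (shr u v))) La"
  by pat_completeness auto
termination
  by (relation "measure (\<lambda>(u, v). length u + length v)") auto

definition shW :: "letter list \<Rightarrow> letter list \<Rightarrow> H" where
  "shW u v = shr (rev u) (rev v)"

definition shH :: "H \<Rightarrow> H \<Rightarrow> H" where
  "shH = bilH shW"

text \<open>A-words are lists of naturals: 0 stands for hbar b, k \<ge> 1 for b a^k.\<close>
definition wordA :: "nat list \<Rightarrow> letter list" where
  "wordA \<alpha> = concat (map (\<lambda>k. Lb # replicate k La) \<alpha>)"

definition embA :: "nat list \<Rightarrow> H" where
  "embA \<alpha> = scaleH (hbar ^ length (filter (\<lambda>k. k = 0) \<alpha>)) (monoH (wordA \<alpha>))"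

definition Arep :: "H \<Rightarrow> (nat list \<Rightarrow> rat poly) \<Rightarrow> bool" where
  "Arep x c \<longleftrightarrow> finite {\<alpha>. c \<alpha> \<noteq> 0} \<and>
     x = (\<lambda>t. \<Sum>\<alpha>\<in>{\<alpha>. c \<alpha> \<noteq> 0}. c \<alpha> * embA \<alpha> t)"

definition CA :: "H set" where
  "CA = {x. \<exists>c. Arep x c}"

definition cA :: "H \<Rightarrow> nat list \<Rightarrow> rat poly" where
  "cA x = (THE c. Arep x c)"

definition linA :: "(nat list \<Rightarrow> H) \<Rightarrow> H \<Rightarrow> H" where
  "linA f x = (\<lambda>t. \<Sum>\<alpha>\<in>{\<alpha>. cA x \<alpha> \<noteq> 0}. cA x \<alpha> * f \<alpha> t)"

fun powH :: "H \<Rightarrow> nat \<Rightarrow> H" where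
  "powH x 0 = monoH []"
| "powH x (Suc n) = concH x (powH x n)"

definition psiL :: "nat \<Rightarrow> H" where
  "psiL k = (if k = 0 then embA [0]
     else concH (monoH [Lb])
            (powH (\<lambda>t. - monoH [La] t - hbar * monoH [] t) k))"

definition psiW :: "nat list \<Rightarrow> H" where
  "psiW \<alpha> = foldr concH (map psiL (rev \<alpha>)) (monoH [])"

definition psiSh :: "H \<Rightarrow> H" where
  "psiSh = linA psiW"

definition wSW :: "nat list \<Rightarrow> H" where
  "wSW \<alpha> = (\<lambda>t. \<Sum>i\<le>length \<alpha>. shH (embA (take i \<alpha>)) (psiW (drop i \<alpha>)) t)"

definition wS :: "H \<Rightarrow> H" where
  "wS = linA wSW"

definition qint :: "complex \<Rightarrow> nat \<Rightarrow> complex" where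
  "qint q m = (1 - q ^ m) / (1 - q)"

text \<open>F_q(m; u) for u = hbar b (k = 0) or u = b a^k (k \<ge> 1).\<close>
definition Fq :: "complex \<Rightarrow> nat \<Rightarrow> nat \<Rightarrow> complex" where
  "Fq q m k = (if k = 0 then 1 - q else q ^ (k * m) / (qint q m) ^ k)"

definition ZW :: "complex \<Rightarrow> nat \<Rightarrow> nat list \<Rightarrow> complex" where
  "ZW q M \<alpha> = (\<Sum>ms\<in>{ms. length ms = length \<alpha> \<and> sorted_wrt (<) ms \<and>
                          (\<forall>m\<in>set ms. 0 < m \<and> m < M)}.
                 \<Prod>i<length \<alpha>. Fq q (ms ! i) (\<alpha> ! i))"

definition evC :: "complex \<Rightarrow> rat poly \<Rightarrow> complex" where
  "evC q c = poly (map_poly of_rat c) (1 - q)"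

definition Zq :: "complex \<Rightarrow> nat \<Rightarrow> H \<Rightarrow> complex" where
  "Zq q M x = (\<Sum>\<alpha>\<in>{\<alpha>. cA x \<alpha> \<noteq> 0}. evC q (cA x \<alpha>) * ZW q M \<alpha>)"

definition ZqS :: "complex \<Rightarrow> nat \<Rightarrow> H \<Rightarrow> complex" where
  "ZqS q M x = Zq q M (wS x)"

end

theory Submission
  imports Defs "HOL-Library.Function_Algebras"
begin


definition fin :: "H \<Rightarrow> bool" where "fin x \<longleftrightarrow> finite (suppH x)"

definition lin :: "(letter list \<Rightarrow> H) \<Rightarrow> H \<Rightarrow> H" where
  "lin f x = (\<lambda>t. \<Sum>u\<in>suppH x. x u * f u t)"

lemma lin_via:
  assumes "finite S" "suppH x \<subseteq> S"
  shows "lin f x = (\<lambda>t. \<Sum>u\<in>S. x u * f u t)"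
  unfolding lin_def
proof
  fix t show "(\<Sum>u\<in>suppH x. x u * f u t) = (\<Sum>u\<in>S. x u * f u t)"
    by (rule sum.mono_neutral_left) (use assms in \<open>auto simp: suppH_def\<close>)
qed

lemma supp_add: "suppH (x + y) \<subseteq> suppH x \<union> suppH y"
  by (auto simp: suppH_def)
lemma supp_minus: "suppH (x - y) \<subseteq> suppH x \<union> suppH y"
  by (auto simp: suppH_def)
lemma supp_uminus: "suppH (- x) = suppH x"
  by (auto simp: suppH_def)
lemma supp_scale: "suppH (scaleH c x) \<subseteq> suppH x"
  by (auto simp: suppH_def scaleH_def)
lemma supp_mono: "suppH (monoH u) \<subseteq> {u}"
  by (auto simp: suppH_def monoH_def)
lemma supp_zero[simp]: "suppH 0 = {}"
  by (auto simp: suppH_def)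

lemma fin_add[intro,simp]: "fin x \<Longrightarrow> fin y \<Longrightarrow> fin (x + y)"
  unfolding fin_def using supp_add finite_subset by blast
lemma fin_minus[intro,simp]: "fin x \<Longrightarrow> fin y \<Longrightarrow> fin (x - y)"
  unfolding fin_def using supp_minus finite_subset by blast
lemma fin_uminus[intro,simp]: "fin x \<Longrightarrow> fin (- x)"
  unfolding fin_def by (simp add: supp_uminus)
lemma fin_scale[intro,simp]: "fin x \<Longrightarrow> fin (scaleH c x)"
  unfolding fin_def using supp_scale finite_subset by blast
lemma fin_mono[intro,simp]: "fin (monoH u)"
  unfolding fin_def using supp_mono finite_subset by blast
lemma fin_zero[intro,simp]: "fin 0"
  unfolding fin_def by simp

lemma lin_add:
  assumes "fin x" "fin y" shows "lin f (x + y) = lin f x + lin f y"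
proof -
  let ?S = "suppH x \<union> suppH y"
  have fS: "finite ?S" using assms by (simp add: fin_def)
  have "lin f (x+y) = (\<lambda>t. \<Sum>u\<in>?S. (x+y) u * f u t)" by (rule lin_via[OF fS supp_add])
  moreover have "lin f x = (\<lambda>t. \<Sum>u\<in>?S. x u * f u t)" by (rule lin_via[OF fS]) auto
  moreover have "lin f y = (\<lambda>t. \<Sum>u\<in>?S. y u * f u t)" by (rule lin_via[OF fS]) auto
  ultimately show ?thesis by (simp add: fun_eq_iff distrib_right sum.distrib)
qed

lemma lin_scale:
  assumes "fin x" shows "lin f (scaleH c x) = scaleH c (lin f x)"
proof -
  have fS: "finite (suppH x)" using assms by (simp add: fin_def)
  have "lin f (scaleH c x) = (\<lambda>t. \<Sum>u\<in>suppH x. scaleH c x u * f u t)" by (rule lin_via[OF fS supp_scale])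
  then show ?thesis by (simp add: lin_def scaleH_def fun_eq_iff sum_distrib_left mult.assoc)
qed

lemma lin_uminus:
  assumes "fin x" shows "lin f (- x) = - lin f x"
  by (simp add: lin_def supp_uminus fun_eq_iff sum_negf)

lemma lin_minus:
  assumes "fin x" "fin y" shows "lin f (x - y) = lin f x - lin f y"
proof -
  have "lin f (x - y) = lin f (x + - y)" by (simp only: diff_conv_add_uminus)
  also have "\<dots> = lin f x + lin f (- y)" by (rule lin_add) (use assms in auto)
  also have "\<dots> = lin f x + - lin f y" using lin_uminus[OF assms(2)] by simp
  finally show ?thesis by (simp only: diff_conv_add_uminus)
qed

lemma lin_zero[simp]: "lin f 0 = 0"
  by (simp add: lin_def fun_eq_iff)

lemma lin_mono[simp]: "lin f (monoH u) = f u"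
proof -
  have "lin f (monoH u) = (\<lambda>t. \<Sum>v\<in>{u}. monoH u v * f v t)" by (rule lin_via[OF _ supp_mono]) auto
  then show ?thesis by (simp add: monoH_def fun_eq_iff)
qed

lemma lin_fadd: "lin (\<lambda>u. f u + g u) x = lin f x + lin g x"
  by (simp add: lin_def fun_eq_iff distrib_left sum.distrib)
lemma lin_fminus: "lin (\<lambda>u. f u - g u) x = lin f x - lin g x"
  by (simp add: lin_def fun_eq_iff right_diff_distrib sum_subtractf)
lemma lin_fuminus: "lin (\<lambda>u. - f u) x = - lin f x"
  by (simp add: lin_def fun_eq_iff sum_negf)
lemma lin_fscale: "lin (\<lambda>u. scaleH c (f u)) x = scaleH c (lin f x)"
  by (simp add: lin_def scaleH_def fun_eq_iff sum_distrib_left mult.left_commute)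
lemma lin_fzero[simp]: "lin (\<lambda>u. 0) x = 0"
  by (simp add: lin_def fun_eq_iff)
lemma lin_cong: "(\<And>u. u \<in> suppH x \<Longrightarrow> f u = g u) \<Longrightarrow> lin f x = lin g x"
  by (simp add: lin_def)

lemma supp_lin: "suppH (lin f x) \<subseteq> (\<Union>u\<in>suppH x. suppH (f u))"
proof
  fix t assume t: "t \<in> suppH (lin f x)"
  show "t \<in> (\<Union>u\<in>suppH x. suppH (f u))"
  proof (rule ccontr)
    assume "t \<notin> (\<Union>u\<in>suppH x. suppH (f u))"
    then have "\<forall>u\<in>suppH x. f u t = 0" by (auto simp: suppH_def)
    then have "lin f x t = 0" by (simp add: lin_def)
    with t show False by (simp add: suppH_def)
  qed
qed

lemma fin_lin[intro]: "fin x \<Longrightarrow> (\<And>u. fin (f u)) \<Longrightarrow> fin (lin f x)"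
  unfolding fin_def by (rule finite_subset[OF supp_lin]) auto

lemma lin_id: "fin x \<Longrightarrow> lin monoH x = x"
proof
  fix t assume "fin x"
  show "lin monoH x t = x t"
  proof (cases "t \<in> suppH x")
    case True
    have "lin monoH x t = (\<Sum>u\<in>suppH x. x u * monoH u t)" by (simp add: lin_def)
    also have "\<dots> = (\<Sum>u\<in>{t}. x u * monoH u t)"
      by (rule sum.mono_neutral_right) (use True \<open>fin x\<close> in \<open>auto simp: fin_def monoH_def\<close>)
    finally show ?thesis by (simp add: monoH_def)
  next
    case False
    then show ?thesis by (auto simp: lin_def monoH_def suppH_def intro!: sum.neutral)
  qed
qed

lemma lin_comp:
  assumes "fin x" "\<And>u. fin (g u)"
  shows "lin f (lin g x) = lin (\<lambda>u. lin f (g u)) x"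
proof -
  let ?S = "\<Union>u\<in>suppH x. suppH (g u)"
  have fS: "finite ?S" using assms by (auto simp: fin_def)
  have "lin f (lin g x) = (\<lambda>t. \<Sum>v\<in>?S. lin g x v * f v t)" by (rule lin_via[OF fS supp_lin])
  also have "\<dots> = (\<lambda>t. \<Sum>v\<in>?S. \<Sum>u\<in>suppH x. x u * g u v * f v t)"
    by (simp add: lin_def sum_distrib_right)
  also have "\<dots> = (\<lambda>t. \<Sum>u\<in>suppH x. \<Sum>v\<in>?S. x u * g u v * f v t)"
    by (rule ext, rule sum.swap)
  also have "\<dots> = (\<lambda>t. \<Sum>u\<in>suppH x. x u * lin f (g u) t)"
  proof (rule ext, rule sum.cong[OF refl])
    fix t u assume u: "u \<in> suppH x"
    have "lin f (g u) = (\<lambda>t. \<Sum>v\<in>?S. g u v * f v t)" by (rule lin_via[OF fS]) (use u in auto)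
    then show "(\<Sum>v\<in>?S. x u * g u v * f v t) = x u * lin f (g u) t"
      by (simp add: sum_distrib_left mult.assoc)
  qed
  finally show ?thesis by (simp add: lin_def)
qed

lemma bilH_lin: "bilH f x y = lin (\<lambda>u. lin (f u) y) x"
  by (simp add: bilH_def lin_def fun_eq_iff sum_distrib_left mult.assoc)


definition eH :: H where "eH = monoH []"

definition bil :: "(letter list \<Rightarrow> letter list \<Rightarrow> H) \<Rightarrow> H \<Rightarrow> H \<Rightarrow> H" where
  "bil f x y = lin (\<lambda>u. lin (f u) y) x"

definition finf :: "(letter list \<Rightarrow> letter list \<Rightarrow> H) \<Rightarrow> bool" where
  "finf f \<longleftrightarrow> (\<forall>u v. fin (f u v))"

lemma lin_swap: "lin (\<lambda>u. lin (g u) y) x = lin (\<lambda>v. lin (\<lambda>u. g u v) x) y"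
  by (simp add: lin_def fun_eq_iff sum_distrib_left mult.left_commute sum.swap[of _ "suppH x"])

lemma bil_mono_mono[simp]: "bil f (monoH u) (monoH v) = f u v"
  by (simp add: bil_def)
lemma bil_mono1: "bil f (monoH u) y = lin (f u) y"
  by (simp add: bil_def)
lemma bil_mono2: "bil f x (monoH v) = lin (\<lambda>u. f u v) x"
  by (simp add: bil_def)

lemma bil_add1: "fin x \<Longrightarrow> fin x' \<Longrightarrow> bil f (x + x') y = bil f x y + bil f x' y"
  by (simp add: bil_def lin_add)
lemma bil_add2: "fin y \<Longrightarrow> fin y' \<Longrightarrow> bil f x (y + y') = bil f x y + bil f x y'"
  by (simp add: bil_def lin_add lin_fadd)
lemma bil_minus1: "fin x \<Longrightarrow> fin x' \<Longrightarrow> bil f (x - x') y = bil f x y - bil f x' y"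
  by (simp add: bil_def lin_minus)
lemma bil_minus2: "fin y \<Longrightarrow> fin y' \<Longrightarrow> bil f x (y - y') = bil f x y - bil f x y'"
  by (simp add: bil_def lin_minus lin_fminus)
lemma bil_uminus1: "fin x \<Longrightarrow> bil f (- x) y = - bil f x y"
  by (simp add: bil_def lin_uminus)
lemma bil_uminus2: "fin y \<Longrightarrow> bil f x (- y) = - bil f x y"
  by (simp add: bil_def lin_uminus lin_fuminus)
lemma bil_scale1: "fin x \<Longrightarrow> bil f (scaleH c x) y = scaleH c (bil f x y)"
  by (simp add: bil_def lin_scale)
lemma bil_scale2: "fin y \<Longrightarrow> bil f x (scaleH c y) = scaleH c (bil f x y)"
  by (simp add: bil_def lin_scale lin_fscale)
lemma bil_zero1[simp]: "bil f 0 y = 0"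
  by (simp add: bil_def)
lemma bil_zero2[simp]: "bil f x 0 = 0"
  by (simp add: bil_def)

lemma fin_bil[intro]: "fin x \<Longrightarrow> fin y \<Longrightarrow> finf f \<Longrightarrow> fin (bil f x y)"
  unfolding bil_def finf_def by (intro fin_lin) auto

lemma bil_lin1: "fin x \<Longrightarrow> (\<And>u. fin (g u)) \<Longrightarrow> bil f (lin g x) y = lin (\<lambda>u. bil f (g u) y) x"
  unfolding bil_def by (rule lin_comp)

lemma bil_lin2:
  assumes "fin y" "\<And>v. fin (g v)"
  shows "bil f x (lin g y) = lin (\<lambda>v. bil f x (g v)) y"
proof -
  have "bil f x (lin g y) = lin (\<lambda>u. lin (\<lambda>v. lin (f u) (g v)) y) x"
    unfolding bil_def by (rule lin_cong) (rule lin_comp[OF assms])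
  also have "\<dots> = lin (\<lambda>v. lin (\<lambda>u. lin (f u) (g v)) x) y" by (rule lin_swap)
  finally show ?thesis by (simp add: bil_def)
qed

lemma bil_swap_form: "bil f x y = lin (\<lambda>v. lin (\<lambda>u. f u v) x) y"
  unfolding bil_def by (rule lin_swap)

lemma appH_lin: "appH (lin f x) l = lin (\<lambda>u. appH (f u) l) x"
  by (simp add: appH_def lin_def fun_eq_iff)
lemma appH_mono[simp]: "appH (monoH u) l = monoH (u @ [l])"
  by (auto simp: appH_def monoH_def fun_eq_iff)
lemma appH_eq_lin: "fin x \<Longrightarrow> appH x l = lin (\<lambda>u. monoH (u @ [l])) x"
  using appH_lin[of monoH x l] lin_id[of x] by simp
lemma fin_appH[intro,simp]: "fin x \<Longrightarrow> fin (appH x l)"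
  by (simp add: appH_eq_lin fin_lin)
lemma appH_add[simp]: "appH (x + y) l = appH x l + appH y l"
  by (simp add: appH_def fun_eq_iff)
lemma appH_minus[simp]: "appH (x - y) l = appH x l - appH y l"
  by (simp add: appH_def fun_eq_iff)
lemma appH_uminus[simp]: "appH (- x) l = - appH x l"
  by (simp add: appH_def fun_eq_iff)
lemma appH_scale[simp]: "appH (scaleH c x) l = scaleH c (appH x l)"
  by (simp add: appH_def scaleH_def fun_eq_iff)
lemma appH_zero[simp]: "appH 0 l = 0"
  by (simp add: appH_def fun_eq_iff)

lemma scaleH_lin: "scaleH c (lin f x) = lin (\<lambda>u. scaleH c (f u)) x"
  by (simp add: lin_fscale)
lemma scaleH_add[simp]: "scaleH c (x + y) = scaleH c x + scaleH c y"
  by (simp add: scaleH_def fun_eq_iff distrib_left)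
lemma scaleH_minus[simp]: "scaleH c (x - y) = scaleH c x - scaleH c y"
  by (simp add: scaleH_def fun_eq_iff right_diff_distrib)
lemma scaleH_uminus[simp]: "scaleH c (- x) = - scaleH c x"
  by (simp add: scaleH_def fun_eq_iff)
lemma scaleH_scaleH[simp]: "scaleH c (scaleH d x) = scaleH (c * d) x"
  by (simp add: scaleH_def fun_eq_iff mult.assoc)
lemma scaleH_zero[simp]: "scaleH c 0 = 0"
  by (simp add: scaleH_def fun_eq_iff)
lemma scaleH_one[simp]: "scaleH 1 x = x"
  by (simp add: scaleH_def fun_eq_iff)
lemma addH_plus[simp]: "addH x y = x + y"
  by (simp add: addH_def fun_eq_iff)

definition cw :: "letter list \<Rightarrow> letter list \<Rightarrow> H" where "cw u v = monoH (u @ v)"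

lemma cw_eta: "cw u = (\<lambda>v. monoH (u @ v))" by (simp add: fun_eq_iff cw_def)

lemma finf_cw[simp]: "finf cw" by (simp add: finf_def cw_def)

lemma concH_bil: "concH = bil cw"
  by (simp add: concH_def bilH_lin bil_def cw_eta fun_eq_iff)

lemma fin_concH[intro,simp]: "fin x \<Longrightarrow> fin y \<Longrightarrow> fin (concH x y)"
  by (simp add: concH_bil fin_bil)

lemma concH_mono[simp]: "concH (monoH u) (monoH v) = monoH (u @ v)"
  by (simp add: concH_bil cw_def)

lemma concH_e1[simp]: "fin x \<Longrightarrow> concH eH x = x"
  by (simp add: concH_bil eH_def bil_mono1 cw_eta lin_id)
lemma concH_e2[simp]: "fin x \<Longrightarrow> concH x eH = x"
  by (simp add: concH_bil eH_def bil_mono2 cw_def lin_id)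

lemma concH_assoc:
  assumes "fin x" "fin y" "fin z"
  shows "concH (concH x y) z = concH x (concH y z)"
proof -
  have "concH (concH x y) z = lin (\<lambda>u. lin (\<lambda>v. lin (\<lambda>w. monoH (u @ v @ w)) z) y) x"
    unfolding concH_bil bil_def
    apply (subst lin_comp[OF assms(1)]) apply (intro fin_lin, simp add: assms, simp add: cw_def)
    apply (rule lin_cong)
    apply (subst lin_comp[OF assms(2)]) apply (simp add: cw_def)
    apply (simp add: cw_def cw_eta)
    done
  moreover have "concH x (concH y z) = lin (\<lambda>u. lin (\<lambda>v. lin (\<lambda>w. monoH (u @ v @ w)) z) y) x"
    unfolding concH_bil bil_def
    apply (rule lin_cong)
    apply (subst lin_comp[OF assms(2)]) apply (intro fin_lin, simp add: assms, simp add: cw_def)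
    apply (rule lin_cong)
    apply (subst lin_comp[OF assms(3)]) apply (simp add: cw_def)
    apply (simp add: cw_def cw_eta)
    done
  ultimately show ?thesis by simp
qed

lemma appH_concH: "fin x \<Longrightarrow> appH x l = concH x (monoH [l])"
  by (simp add: appH_eq_lin concH_bil bil_mono2 cw_def)

lemma appH_concH2: "fin x \<Longrightarrow> fin y \<Longrightarrow> appH (concH x y) l = concH x (appH y l)"
  by (simp add: appH_concH concH_assoc)

lemma concH_add1: "fin x \<Longrightarrow> fin x' \<Longrightarrow> concH (x + x') y = concH x y + concH x' y"
  by (simp add: concH_bil bil_add1)
lemma concH_add2: "fin y \<Longrightarrow> fin y' \<Longrightarrow> concH x (y + y') = concH x y + concH x y'"
  by (simp add: concH_bil bil_add2)
lemma concH_minus1: "fin x \<Longrightarrow> fin x' \<Longrightarrow> concH (x - x') y = concH x y - concH x' y"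
  by (simp add: concH_bil bil_minus1)
lemma concH_minus2: "fin y \<Longrightarrow> fin y' \<Longrightarrow> concH x (y - y') = concH x y - concH x y'"
  by (simp add: concH_bil bil_minus2)
lemma concH_uminus1: "fin x \<Longrightarrow> concH (- x) y = - concH x y"
  by (simp add: concH_bil bil_uminus1)
lemma concH_uminus2: "fin y \<Longrightarrow> concH x (- y) = - concH x y"
  by (simp add: concH_bil bil_uminus2)
lemma concH_scale1: "fin x \<Longrightarrow> concH (scaleH c x) y = scaleH c (concH x y)"
  by (simp add: concH_bil bil_scale1)
lemma concH_scale2: "fin y \<Longrightarrow> concH x (scaleH c y) = scaleH c (concH x y)"
  by (simp add: concH_bil bil_scale2)
lemma concH_zero1[simp]: "concH 0 y = 0" by (simp add: concH_bil)
lemma concH_zero2[simp]: "concH x 0 = 0" by (simp add: concH_bil)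

lemmas concH_lin_simps = concH_add1 concH_add2 concH_minus1 concH_minus2 concH_uminus1 concH_uminus2
  concH_scale1 concH_scale2


lemma shr_nil2[simp]: "shr x [] = monoH (rev x)"
  by (cases x) auto

lemma fin_shr[intro,simp]: "fin (shr x y)"
  by (induction x y rule: shr.induct) (simp_all only: shr.simps addH_plus fin_appH fin_add fin_scale fin_mono)

lemma fin_shW[intro,simp]: "fin (shW u v)"
  by (simp add: shW_def)

lemma shW_nil1[simp]: "shW [] v = monoH v" by (simp add: shW_def)
lemma shW_nil1_eta: "shW [] = monoH" by (simp add: fun_eq_iff)
lemma shW_nil2[simp]: "shW u [] = monoH u" by (simp add: shW_def)

lemma shr_b1: "shr (Lb # x) y = appH (shr x y) Lb"
  by (cases y) auto

lemma shr_b2: "shr x (Lb # y) = appH (shr x y) Lb"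
proof (induction x)
  case Nil then show ?case by simp
next
  case (Cons l x)
  show ?case
  proof (cases l)
    case La then show ?thesis by simp
  next
    case Lb then show ?thesis using Cons by (simp add: shr_b1)
  qed
qed

lemma shW_b1: "shW (u @ [Lb]) v = appH (shW u v) Lb"
  by (simp add: shW_def shr_b1)
lemma shW_b2: "shW u (v @ [Lb]) = appH (shW u v) Lb"
  by (simp add: shW_def shr_b2)
lemma shW_aa: "shW (u @ [La]) (v @ [La]) =
   appH (shW (u @ [La]) v + shW u (v @ [La]) + scaleH hbar (shW u v)) La"
  by (simp add: shW_def scaleH_def)

lemma shW_comm: "shW u v = shW v u"
proof (induction "length u + length v" arbitrary: u v rule: less_induct)
  case less
  show ?case
  proof (cases u rule: rev_cases)
    case Nil then show ?thesis by simp
  next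
    case (snoc u' l)
    show ?thesis
    proof (cases v rule: rev_cases)
      case Nil then show ?thesis by simp
    next
      case (snoc v' l')
      note u = \<open>u = u' @ [l]\<close> and v = this
      show ?thesis
      proof (cases l)
        case Lb then show ?thesis using less u v by (simp add: shW_b1 shW_b2)
      next
        case La
        show ?thesis
        proof (cases l')
          case Lb then show ?thesis using less u v by (simp add: shW_b1 shW_b2)
        next
          case La': La
          have "shW u v' = shW v' u" "shW u' v = shW v u'" "shW u' v' = shW v' u'"
            using less u v by auto
          then show ?thesis using u v La La' by (simp add: shW_aa add_ac)
        qed
      qed
    qed
  qed
qed

lemma finf_shW[simp]: "finf shW" by (simp add: finf_def)

lemma shH_bil: "shH = bil shW"
  by (simp add: shH_def bilH_lin bil_def fun_eq_iff)

lemma fin_shH[intro,simp]: "fin x \<Longrightarrow> fin y \<Longrightarrow> fin (shH x y)"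
  by (simp add: shH_bil fin_bil)
lemma shH_mono_mono[simp]: "shH (monoH u) (monoH v) = shW u v"
  by (simp add: shH_bil)

lemma shH_comm: "shH x y = shH y x"
  by (simp add: shH_bil bil_def lin_swap[of _ y x] shW_comm)

lemma shH_e1[simp]: "fin x \<Longrightarrow> shH eH x = x"
  by (simp add: shH_bil bil_mono1 eH_def lin_id shW_nil1_eta)
lemma shH_e2[simp]: "fin x \<Longrightarrow> shH x eH = x"
  using shH_e1[of x] shH_comm[of x eH] by simp

lemma shH_add1: "fin x \<Longrightarrow> fin x' \<Longrightarrow> shH (x + x') y = shH x y + shH x' y"
  by (simp add: shH_bil bil_add1)
lemma shH_add2: "fin y \<Longrightarrow> fin y' \<Longrightarrow> shH x (y + y') = shH x y + shH x y'"
  by (simp add: shH_bil bil_add2)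
lemma shH_minus1: "fin x \<Longrightarrow> fin x' \<Longrightarrow> shH (x - x') y = shH x y - shH x' y"
  by (simp add: shH_bil bil_minus1)
lemma shH_minus2: "fin y \<Longrightarrow> fin y' \<Longrightarrow> shH x (y - y') = shH x y - shH x y'"
  by (simp add: shH_bil bil_minus2)
lemma shH_uminus1: "fin x \<Longrightarrow> shH (- x) y = - shH x y"
  by (simp add: shH_bil bil_uminus1)
lemma shH_uminus2: "fin y \<Longrightarrow> shH x (- y) = - shH x y"
  by (simp add: shH_bil bil_uminus2)
lemma shH_scale1: "fin x \<Longrightarrow> shH (scaleH c x) y = scaleH c (shH x y)"
  by (simp add: shH_bil bil_scale1)
lemma shH_scale2: "fin y \<Longrightarrow> shH x (scaleH c y) = scaleH c (shH x y)"
  by (simp add: shH_bil bil_scale2)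
lemma shH_zero1[simp]: "shH 0 y = 0" by (simp add: shH_bil)
lemma shH_zero2[simp]: "shH x 0 = 0" by (simp add: shH_bil)

lemmas shH_lin_simps = shH_add1 shH_add2 shH_minus1 shH_minus2 shH_uminus1 shH_uminus2
  shH_scale1 shH_scale2

lemma appH_bilform: "appH (lin (\<lambda>u. lin (f u) y) x) l = lin (\<lambda>u. lin (\<lambda>v. appH (f u v) l) y) x"
  by (simp add: appH_lin)

lemma shH_form: "shH x y = lin (\<lambda>u. lin (\<lambda>v. shW u v) y) x"
  by (simp add: shH_bil bil_def)

lemma shH_app1_form: "fin x \<Longrightarrow> shH (appH x l) y = lin (\<lambda>u. lin (\<lambda>v. shW (u @ [l]) v) y) x"
  by (simp add: appH_eq_lin shH_bil bil_lin1 bil_mono1)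

lemma shH_app2_form: "fin y \<Longrightarrow> shH x (appH y l) = lin (\<lambda>u. lin (\<lambda>v. shW u (v @ [l])) y) x"
  by (simp add: appH_eq_lin shH_bil bil_def lin_comp)

lemma shH_app12_form: "fin x \<Longrightarrow> fin y \<Longrightarrow>
   shH (appH x l) (appH y l') = lin (\<lambda>u. lin (\<lambda>v. shW (u @ [l]) (v @ [l'])) y) x"
  by (simp add: shH_app1_form[of x] shH_app2_form[of y])
     (simp add: appH_eq_lin lin_comp)

lemma shH_b1: "fin x \<Longrightarrow> shH (appH x Lb) y = appH (shH x y) Lb"
  using shH_app1_form[of x Lb y] by (simp add: shH_form appH_bilform shW_b1)
lemma shH_b2: "fin y \<Longrightarrow> shH x (appH y Lb) = appH (shH x y) Lb"
  using shH_app2_form[of y x Lb] by (simp add: shH_form appH_bilform shW_b2)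

lemma shH_aa:
  assumes "fin x" "fin y"
  shows "shH (appH x La) (appH y La) =
    appH (shH (appH x La) y + shH x (appH y La) + scaleH hbar (shH x y)) La"
proof -
  have "shH (appH x La) (appH y La) = lin (\<lambda>u. lin (\<lambda>v. shW (u @ [La]) (v @ [La])) y) x"
    by (rule shH_app12_form[OF assms])
  also have "\<dots> = lin (\<lambda>u. lin (\<lambda>v. appH (shW (u @ [La]) v) La) y) x
      + lin (\<lambda>u. lin (\<lambda>v. appH (shW u (v @ [La])) La) y) x
      + scaleH hbar (lin (\<lambda>u. lin (\<lambda>v. appH (shW u v) La) y) x)"
    by (simp add: shW_aa lin_fadd lin_fscale)
  also have "\<dots> = appH (shH (appH x La) y + shH x (appH y La) + scaleH hbar (shH x y)) La"
    using assms shH_app1_form[of x La y] shH_app2_form[of y x La] by (simp add: shH_form appH_bilform)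
  finally show ?thesis .
qed


lemma appH_e: "appH eH l = monoH [l]" by (simp add: eH_def)
lemma mono_snoc: "monoH (u @ [l]) = appH (monoH u) l" by simp

lemma shW_assoc: "shH (shW u v) (monoH w) = shH (monoH u) (shW v w)"
proof (induction "length u + length v + length w" arbitrary: u v w rule: less_induct)
  case less
  show ?case
  proof (cases "u = [] \<or> v = [] \<or> w = []")
    case True
    then show ?thesis
      using shH_e1[of "shW v w"] shH_e2[of "shW u v"] by (auto simp: eH_def)
  next
    case False
    then obtain u' l1 v' l2 w' l3 where u: "u = u' @ [l1]" and v: "v = v' @ [l2]" and w: "w = w' @ [l3]"
      by (metis rev_exhaust)
    show ?thesis
    proof (cases "l1 = Lb")
      case True
      have "shH (shW u v) (monoH w) = appH (shH (shW u' v) (monoH w)) Lb"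
        using u True by (simp add: shW_b1 shH_b1)
      also have "\<dots> = appH (shH (monoH u') (shW v w)) Lb" using less u by simp
      also have "\<dots> = shH (monoH u) (shW v w)" using u True shH_b1[of "monoH u'" "shW v w"] by simp
      finally show ?thesis .
    next
      case nb1: False
      show ?thesis
      proof (cases "l2 = Lb")
        case True
        have "shH (shW u v) (monoH w) = appH (shH (shW u v') (monoH w)) Lb"
          using v True shH_b1[of "shW u v'" "monoH w"] by (simp add: shW_b2)
        also have "\<dots> = appH (shH (monoH u) (shW v' w)) Lb" using less v by simp
        also have "\<dots> = shH (monoH u) (shW v w)" using v True by (simp add: shW_b1 shH_b2)
        finally show ?thesis .
      next
        case nb2: False
        show ?thesis
        proof (cases "l3 = Lb")
          case True
          have "shH (shW u v) (monoH w) = appH (shH (shW u v) (monoH w')) Lb"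
            using w True shH_b2[of "monoH w'" "shW u v"] by simp
          also have "\<dots> = appH (shH (monoH u) (shW v w')) Lb" using less w by simp
          also have "\<dots> = shH (monoH u) (shW v w)" using w True by (simp add: shW_b2 shH_b2)
          finally show ?thesis .
        next
          case False
          then have a: "l1 = La" "l2 = La" "l3 = La" using nb1 nb2 by (cases l1; cases l2; cases l3; auto)+
          define U' where "U' = monoH u'"
          define V' where "V' = monoH v'"
          define W' where "W' = monoH w'"
          have U: "monoH u = appH U' La" and V: "monoH v = appH V' La" and W: "monoH w = appH W' La"
            using u v w a by (simp_all add: U'_def V'_def W'_def)
          have fU[simp]: "fin U'" and fV[simp]: "fin V'" and fW[simp]: "fin W'"
            by (simp_all add: U'_def V'_def W'_def)
          have I: "\<And>p q r. length p + length q + length r < length u + length v + length w \<Longrightarrow>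
              shH (shH (monoH p) (monoH q)) (monoH r) = shH (monoH p) (shH (monoH q) (monoH r))"
            using less by simp
          have U'd: "monoH u' = U'" and V'd: "monoH v' = V'" and W'd: "monoH w' = W'"
            by (simp_all add: U'_def V'_def W'_def)
          have i1: "shH (shH (appH U' La) (appH V' La)) W' = shH (appH U' La) (shH (appH V' La) W')"
            using I[of u v w'] unfolding U V W'd using w by simp
          have i2: "shH (shH (appH U' La) V') (appH W' La) = shH (appH U' La) (shH V' (appH W' La))"
            using I[of u v' w] unfolding U W V'd using v by simp
          have i3: "shH (shH U' (appH V' La)) (appH W' La) = shH U' (shH (appH V' La) (appH W' La))"
            using I[of u' v w] unfolding V W U'd using u by simp
          have i4: "shH (shH U' V') (appH W' La) = shH U' (shH V' (appH W' La))"
            using I[of u' v' w] unfolding W U'd V'd using u v by simp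
          have i5: "shH (shH (appH U' La) V') W' = shH (appH U' La) (shH V' W')"
            using I[of u v' w'] unfolding U V'd W'd using v w by simp
          have i6: "shH (shH U' (appH V' La)) W' = shH U' (shH (appH V' La) W')"
            using I[of u' v w'] unfolding V U'd W'd using u w by simp
          have i7: "shH (shH U' V') W' = shH U' (shH V' W')"
            using I[of u' v' w'] unfolding U'd V'd W'd using u v w by simp
          define P where "P = shH (appH U' La) V' + shH U' (appH V' La) + scaleH hbar (shH U' V')"
          define Q where "Q = shH (appH V' La) W' + shH V' (appH W' La) + scaleH hbar (shH V' W')"
          have fP[simp]: "fin P" by (simp add: P_def)
          have fQ[simp]: "fin Q" by (simp add: Q_def)
          have UV: "shH (appH U' La) (appH V' La) = appH P La" by (simp add: P_def shH_aa)
          have VW: "shH (appH V' La) (appH W' La) = appH Q La" by (simp add: Q_def shH_aa)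
          have "shH (shW u v) (monoH w) = shH (appH P La) (appH W' La)"
            unfolding shH_mono_mono[symmetric] U V W UV ..
          also have "\<dots> = appH (shH (appH P La) W' + shH P (appH W' La) + scaleH hbar (shH P W')) La"
            by (simp add: shH_aa)
          also have "\<dots> = appH (shH (appH U' La) (shH (appH V' La) W')
              + (shH (appH U' La) (shH V' (appH W' La)) + shH U' (shH (appH V' La) (appH W' La))
                  + scaleH hbar (shH U' (shH V' (appH W' La))))
              + scaleH hbar (shH (appH U' La) (shH V' W') + shH U' (shH (appH V' La) W')
                  + scaleH hbar (shH U' (shH V' W')))) La"
            by (simp add: i1 i2 i3 i4 i5 i6 i7 flip: UV) (simp add: P_def shH_lin_simps i1 i2 i3 i4 i5 i6 i7 add_ac)
          also have "\<dots> = appH (shH (appH U' La) Q + shH U' (appH Q La) + scaleH hbar (shH U' Q)) La"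
            by (simp only: VW[symmetric]) (simp add: Q_def shH_lin_simps add_ac)
          also have "\<dots> = shH (appH U' La) (appH Q La)"
            by (simp add: shH_aa)
          also have "\<dots> = shH (monoH u) (shW v w)"
            unfolding shH_mono_mono[symmetric] U V W VW ..
          finally show ?thesis .
        qed
      qed
    qed
  qed
qed


lemma shH_left_expand: "shH X Y = lin (\<lambda>u. shH (monoH u) Y) X"
  by (simp add: shH_bil bil_def bil_mono1)
lemma shH_right_expand: "shH X Y = lin (\<lambda>v. shH X (monoH v)) Y"
  by (simp add: shH_bil bil_swap_form bil_mono2)
lemma shH_lin1: "fin X \<Longrightarrow> (\<And>u. fin (g u)) \<Longrightarrow> shH (lin g X) Y = lin (\<lambda>u. shH (g u) Y) X"
  by (simp add: shH_bil bil_lin1)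
lemma shH_lin2: "fin Y \<Longrightarrow> (\<And>u. fin (g u)) \<Longrightarrow> shH X (lin g Y) = lin (\<lambda>v. shH X (g v)) Y"
  by (simp add: shH_bil bil_lin2)
lemma concH_left_expand: "concH X Y = lin (\<lambda>u. concH (monoH u) Y) X"
  by (simp add: concH_bil bil_def bil_mono1)
lemma concH_right_expand: "concH X Y = lin (\<lambda>v. concH X (monoH v)) Y"
  by (simp add: concH_bil bil_swap_form bil_mono2)
lemma concH_lin1: "fin X \<Longrightarrow> (\<And>u. fin (g u)) \<Longrightarrow> concH (lin g X) Y = lin (\<lambda>u. concH (g u) Y) X"
  by (simp add: concH_bil bil_lin1)
lemma concH_lin2: "fin Y \<Longrightarrow> (\<And>u. fin (g u)) \<Longrightarrow> concH X (lin g Y) = lin (\<lambda>v. concH X (g v)) Y"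
  by (simp add: concH_bil bil_lin2)

lemma shH_assoc:
  assumes "fin x" "fin y" "fin z"
  shows "shH (shH x y) z = shH x (shH y z)"
proof -
  have "shH (shH x y) z = lin (\<lambda>u. lin (\<lambda>v. shH (shW u v) z) y) x"
    using assms by (simp add: shH_form[of x y] shH_lin1 fin_lin)
  also have "\<dots> = lin (\<lambda>u. lin (\<lambda>v. lin (\<lambda>w. shH (shW u v) (monoH w)) z) y) x"
    by (subst shH_right_expand) (rule refl)
  also have "\<dots> = lin (\<lambda>u. lin (\<lambda>v. lin (\<lambda>w. shH (monoH u) (shW v w)) z) y) x"
    by (simp add: shW_assoc)
  also have "\<dots> = shH x (shH y z)"
    using assms by (simp add: shH_left_expand[of x] shH_form[of y z] shH_lin2 fin_lin)
  finally show ?thesis .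
qed

lemma shH_lcomm: "fin x \<Longrightarrow> fin y \<Longrightarrow> fin z \<Longrightarrow> shH x (shH y z) = shH y (shH x z)"
  by (metis shH_assoc shH_comm)

fun rhoL :: "letter \<Rightarrow> H" where
  "rhoL La = (\<lambda>t. - monoH [La] t - hbar * monoH [] t)"
| "rhoL Lb = monoH [Lb]"

fun rhoW :: "letter list \<Rightarrow> H" where
  "rhoW [] = eH"
| "rhoW (l # w) = concH (rhoW w) (rhoL l)"

definition rho :: "H \<Rightarrow> H" where "rho X = lin rhoW X"

lemma rhoL_a: "rhoL La = - monoH [La] - scaleH hbar eH"
  by (simp add: fun_eq_iff scaleH_def eH_def)

lemma fin_eH[simp]: "fin eH" by (simp add: eH_def)
lemma fin_rhoL[simp]: "fin (rhoL l)" by (cases l) (simp add: rhoL_a del: rhoL.simps, simp)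
lemma fin_rhoW[simp]: "fin (rhoW w)" by (induction w) simp_all
lemma fin_rho[simp]: "fin X \<Longrightarrow> fin (rho X)" by (simp add: rho_def fin_lin)

lemma rho_mono[simp]: "rho (monoH w) = rhoW w" by (simp add: rho_def)

lemma rhoW_append: "rhoW (u @ v) = concH (rhoW v) (rhoW u)"
  by (induction u) (simp_all add: concH_assoc)

lemma rhoW_single[simp]: "rhoW [l] = rhoL l" by simp

lemma rhoW_snoc: "rhoW (u @ [l]) = concH (rhoL l) (rhoW u)"
  by (simp add: rhoW_append)

lemma rho_add: "fin x \<Longrightarrow> fin y \<Longrightarrow> rho (x + y) = rho x + rho y" by (simp add: rho_def lin_add)
lemma rho_minus: "fin x \<Longrightarrow> fin y \<Longrightarrow> rho (x - y) = rho x - rho y" by (simp add: rho_def lin_minus)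
lemma rho_uminus: "fin x \<Longrightarrow> rho (- x) = - rho x" by (simp add: rho_def lin_uminus)
lemma rho_scale: "fin x \<Longrightarrow> rho (scaleH c x) = scaleH c (rho x)" by (simp add: rho_def lin_scale)

lemma rho_concH:
  assumes "fin X" "fin Y"
  shows "rho (concH X Y) = concH (rho Y) (rho X)"
proof -
  have "rho (concH X Y) = lin (\<lambda>u. lin (\<lambda>v. concH (rhoW v) (rhoW u)) Y) X"
    using assms by (simp add: rho_def concH_bil bil_def lin_comp fin_lin cw_eta rhoW_append)
  also have "\<dots> = concH (rho Y) (rho X)"
    using assms by (simp add: rho_def concH_lin1 concH_lin2)
  finally show ?thesis .
qed

lemma rho_eH[simp]: "rho eH = eH"
proof -
  have "rho eH = rhoW []" unfolding eH_def by (rule rho_mono)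
  also have "rhoW [] = eH" by (rule rhoW.simps(1))
  finally show ?thesis .
qed

lemma rho_rhoL[simp]: "rho (rhoL l) = monoH [l]"
proof (cases l)
  case La
  have "rho (rhoL La) = - rhoL La - scaleH hbar eH"
    by (simp add: rhoL_a rho_minus rho_uminus rho_scale del: rhoL.simps)
  also have "\<dots> = monoH [La]" by (simp add: rhoL_a del: rhoL.simps)
  finally show ?thesis using La by simp
next
  case Lb then show ?thesis by simp
qed

lemma rho_rhoW[simp]: "rho (rhoW w) = monoH w"
proof (induction w)
  case Nil then show ?case by (simp, simp add: eH_def)
next
  case (Cons l w)
  have "rho (rhoW (l # w)) = concH (rho (rhoL l)) (rho (rhoW w))"
    by (simp add: rho_concH del: rho_rhoL)
  also have "\<dots> = monoH (l # w)" using Cons by simp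
  finally show ?case .
qed

lemma conc_ra: "fin Z \<Longrightarrow> concH Z (rhoL La) = - appH Z La - scaleH hbar Z"
  by (simp add: rhoL_a concH_minus2 concH_uminus2 concH_scale2 appH_concH del: rhoL.simps)

lemma conc_rb: "fin Z \<Longrightarrow> concH Z (rhoL Lb) = appH Z Lb"
  by (simp add: appH_concH)


lemma lambda_zero[simp]: "(\<lambda>a. 0) = (0::H)" by (simp add: fun_eq_iff)

fun Kw :: "letter list \<Rightarrow> H \<Rightarrow> H \<Rightarrow> H" where
  "Kw [] p q = 0"
| "Kw (Lb # v) p q = shH p (concH q (rhoW v)) + Kw v (appH p Lb) q"
| "Kw (La # v) p q = Kw v (appH p La) q"

definition Klin :: "H \<Rightarrow> H \<Rightarrow> H \<Rightarrow> H" where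
  "Klin X p q = lin (\<lambda>u. Kw u p q) X"

lemma fin_Kw[simp]: "fin p \<Longrightarrow> fin q \<Longrightarrow> fin (Kw v p q)"
  by (induction v p q rule: Kw.induct) auto

lemma fin_Klin[simp]: "fin X \<Longrightarrow> fin p \<Longrightarrow> fin q \<Longrightarrow> fin (Klin X p q)"
  by (simp add: Klin_def fin_lin)

lemma Kw_add3: "fin p \<Longrightarrow> fin q \<Longrightarrow> fin q' \<Longrightarrow> Kw v p (q + q') = Kw v p q + Kw v p q'"
  by (induction v p q rule: Kw.induct) (auto simp: concH_add1 shH_add2 add_ac)
lemma Kw_uminus3: "fin p \<Longrightarrow> fin q \<Longrightarrow> Kw v p (- q) = - Kw v p q"
  by (induction v p q rule: Kw.induct) (auto simp: concH_uminus1 shH_uminus2 add_ac)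
lemma Kw_scale3: "fin p \<Longrightarrow> fin q \<Longrightarrow> Kw v p (scaleH c q) = scaleH c (Kw v p q)"
  by (induction v p q rule: Kw.induct) (auto simp: concH_scale1 shH_scale2 add_ac)
lemma Kw_minus3: "fin p \<Longrightarrow> fin q \<Longrightarrow> fin q' \<Longrightarrow> Kw v p (q - q') = Kw v p q - Kw v p q'"
proof -
  assume a: "fin p" "fin q" "fin q'"
  have "Kw v p (q + - q') = Kw v p q + Kw v p (- q')" by (rule Kw_add3) (use a in auto)
  then show ?thesis by (simp add: Kw_uminus3 a)
qed


lemma Kw_snoc_b:
  assumes "fin p" "fin q"
  shows "Kw (v @ [Lb]) p q = shH (concH p (monoH v)) q + Kw v p (concH q (rhoL Lb))"
  using assms
proof (induction v arbitrary: p)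
  case Nil
  then show ?case by (simp add: eH_def[symmetric])
next
  case (Cons l' v)
  have c2: "\<And>l. concH q (concH (rhoL l) (rhoW v)) = concH (concH q (rhoL l)) (rhoW v)"
    using Cons.prems by (simp add: concH_assoc del: rhoL.simps)
  show ?case
  proof (cases l')
    case La
    have c1: "concH (appH p La) (monoH v) = concH p (monoH (La # v))"
      using Cons.prems by (simp add: appH_concH concH_assoc)
    show ?thesis using La Cons.prems Cons.IH[of "appH p La"]
      by (simp add: c1 del: rhoL.simps)
  next
    case Lb
    have c1: "concH (appH p Lb) (monoH v) = concH p (monoH (Lb # v))"
      using Cons.prems by (simp add: appH_concH concH_assoc)
    show ?thesis using Lb Cons.prems Cons.IH[of "appH p Lb"]
      by (simp add: c1 rhoW_snoc c2 add_ac del: rhoL.simps)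
  qed
qed

lemma Kw_snoc_a:
  assumes "fin p" "fin q"
  shows "Kw (v @ [La]) p q = Kw v p (concH q (rhoL La))"
  using assms
proof (induction v arbitrary: p)
  case Nil
  then show ?case by simp
next
  case (Cons l' v)
  have c2: "\<And>l. concH q (concH (rhoL l) (rhoW v)) = concH (concH q (rhoL l)) (rhoW v)"
    using Cons.prems by (simp add: concH_assoc del: rhoL.simps)
  show ?case
  proof (cases l')
    case La
    show ?thesis using La Cons.prems Cons.IH[of "appH p La"] by (simp del: rhoL.simps)
  next
    case Lb
    show ?thesis using Lb Cons.prems Cons.IH[of "appH p Lb"]
      by (simp add: rhoW_snoc c2 del: rhoL.simps)
  qed
qed

lemma concH_cons_form: "fin W \<Longrightarrow> concH (monoH [l]) W = lin (\<lambda>w. monoH (l # w)) W"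
  by (simp add: concH_bil bil_mono1 cw_eta)

lemma Klin_mono[simp]: "Klin (monoH u) p q = Kw u p q" by (simp add: Klin_def)
lemma Klin_zero1[simp]: "Klin 0 p q = 0" by (simp add: Klin_def)
lemma Klin_add1: "fin X \<Longrightarrow> fin Y \<Longrightarrow> Klin (X + Y) p q = Klin X p q + Klin Y p q"
  by (simp add: Klin_def lin_add)
lemma Klin_minus1: "fin X \<Longrightarrow> fin Y \<Longrightarrow> Klin (X - Y) p q = Klin X p q - Klin Y p q"
  by (simp add: Klin_def lin_minus)
lemma Klin_uminus1: "fin X \<Longrightarrow> Klin (- X) p q = - Klin X p q"
  by (simp add: Klin_def lin_uminus)
lemma Klin_scale1: "fin X \<Longrightarrow> Klin (scaleH c X) p q = scaleH c (Klin X p q)"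
  by (simp add: Klin_def lin_scale)
lemma Klin_add3: "fin p \<Longrightarrow> fin q \<Longrightarrow> fin q' \<Longrightarrow> Klin X p (q + q') = Klin X p q + Klin X p q'"
  unfolding Klin_def by (simp only: Kw_add3 lin_fadd)
lemma Klin_uminus3: "fin p \<Longrightarrow> fin q \<Longrightarrow> Klin X p (- q) = - Klin X p q"
  unfolding Klin_def by (simp only: Kw_uminus3 lin_fuminus)
lemma Klin_scale3: "fin p \<Longrightarrow> fin q \<Longrightarrow> Klin X p (scaleH c q) = scaleH c (Klin X p q)"
  unfolding Klin_def by (simp only: Kw_scale3 lin_fscale)
lemma Klin_minus3: "fin p \<Longrightarrow> fin q \<Longrightarrow> fin q' \<Longrightarrow> Klin X p (q - q') = Klin X p q - Klin X p q'"
proof -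
  assume a: "fin p" "fin q" "fin q'"
  have "Klin X p (q + - q') = Klin X p q + Klin X p (- q')" by (rule Klin_add3) (use a in auto)
  then show ?thesis by (simp add: Klin_uminus3 a)
qed

lemma Klin_app_b:
  assumes "fin W" "fin p" "fin q"
  shows "Klin (appH W Lb) p q = shH (concH p W) q + Klin W p (concH q (rhoL Lb))"
proof -
  have "Klin (appH W Lb) p q = lin (\<lambda>w. Kw (w @ [Lb]) p q) W"
    using assms unfolding Klin_def appH_eq_lin[OF assms(1)] by (simp only: lin_comp fin_mono lin_mono)
  also have "\<dots> = lin (\<lambda>w. shH (concH p (monoH w)) q + Kw w p (concH q (rhoL Lb))) W"
    using assms by (simp only: Kw_snoc_b)
  also have "\<dots> = lin (\<lambda>w. shH (concH p (monoH w)) q) W + Klin W p (concH q (rhoL Lb))"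
    unfolding Klin_def by (rule lin_fadd)
  also have "lin (\<lambda>w. shH (concH p (monoH w)) q) W = shH (concH p W) q"
    using assms by (simp add: concH_right_expand[of p W] shH_lin1)
  finally show ?thesis .
qed

lemma Klin_app_a:
  assumes "fin W" "fin p" "fin q"
  shows "Klin (appH W La) p q = Klin W p (concH q (rhoL La))"
proof -
  have "Klin (appH W La) p q = lin (\<lambda>w. Kw (w @ [La]) p q) W"
    using assms unfolding Klin_def appH_eq_lin[OF assms(1)] by (simp only: lin_comp fin_mono lin_mono)
  also have "\<dots> = Klin W p (concH q (rhoL La))"
    using assms unfolding Klin_def by (simp only: Kw_snoc_a)
  finally show ?thesis .
qed

lemma Klin_cons_b:
  assumes "fin W" "fin p" "fin q"
  shows "Klin (concH (monoH [Lb]) W) p q = shH p (concH q (rho W)) + Klin W (appH p Lb) q"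
proof -
  have "Klin (concH (monoH [Lb]) W) p q = lin (\<lambda>w. Kw (Lb # w) p q) W"
    using assms unfolding Klin_def concH_cons_form[OF assms(1)] by (simp only: lin_comp fin_mono lin_mono)
  also have "\<dots> = lin (\<lambda>w. shH p (concH q (rhoW w)) + Kw w (appH p Lb) q) W"
    by (simp only: Kw.simps)
  also have "\<dots> = lin (\<lambda>w. shH p (concH q (rhoW w))) W + Klin W (appH p Lb) q"
    unfolding Klin_def by (rule lin_fadd)
  also have "lin (\<lambda>w. shH p (concH q (rhoW w))) W = shH p (concH q (rho W))"
    using assms by (simp add: rho_def concH_lin2 shH_lin2)
  finally show ?thesis .
qed

lemma Klin_cons_a:
  assumes "fin W" "fin p" "fin q"
  shows "Klin (concH (monoH [La]) W) p q = Klin W (appH p La) q"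
proof -
  have "Klin (concH (monoH [La]) W) p q = lin (\<lambda>w. Kw (La # w) p q) W"
    using assms unfolding Klin_def concH_cons_form[OF assms(1)] by (simp only: lin_comp fin_mono lin_mono)
  also have "\<dots> = Klin W (appH p La) q"
    unfolding Klin_def by (simp only: Kw.simps)
  finally show ?thesis .
qed


lemma Klin_concat:
  assumes "fin V" "fin p" "fin q"
  shows "Klin (concH (monoH u) V) p q = Kw u p (concH q (rho V)) + Klin V (concH p (monoH u)) q"
  using assms
proof (induction u arbitrary: p)
  case Nil
  then show ?case by (simp add: eH_def[symmetric])
next
  case (Cons l u)
  have split: "concH (monoH (l # u)) V = concH (monoH [l]) (concH (monoH u) V)"
    using Cons.prems by (simp add: concH_assoc[symmetric])
  have rc: "rho (concH (monoH u) V) = concH (rho V) (rhoW u)"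
    using Cons.prems by (simp add: rho_concH)
  have pc: "concH (appH p l) (monoH u) = concH p (monoH (l # u))"
    using Cons.prems by (simp add: appH_concH concH_assoc)
  have qc: "concH q (concH (rho V) (rhoW u)) = concH (concH q (rho V)) (rhoW u)"
    using Cons.prems by (simp add: concH_assoc)
  show ?case
  proof (cases l)
    case La
    show ?thesis unfolding split
      using Cons.prems Cons.IH[of "appH p La"] pc La by (simp add: Klin_cons_a)
  next
    case Lb
    show ?thesis unfolding split
      using Cons.prems Cons.IH[of "appH p Lb"] pc Lb by (simp add: Klin_cons_b rc qc add_ac)
  qed
qed

lemma concH_ra1: "fin W \<Longrightarrow> concH (rhoL La) W = - concH (monoH [La]) W - scaleH hbar W"
  by (simp add: rhoL_a concH_minus1 concH_uminus1 concH_scale1 del: rhoL.simps)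

lemma Klin_swap:
  assumes "fin p" "fin q"
  shows "Klin (rhoW v) p q = Kw v q p"
  using assms
proof (induction v arbitrary: p q rule: rev_induct)
  case Nil
  then show ?case by (simp add: eH_def)
next
  case (snoc l v)
  show ?case
  proof (cases l)
    case Lb
    have "Klin (rhoW (v @ [l])) p q = Klin (concH (monoH [Lb]) (rhoW v)) p q"
      using Lb by (simp add: rhoW_snoc)
    also have "\<dots> = shH p (concH q (monoH v)) + Kw v q (appH p Lb)"
      using snoc by (simp add: Klin_cons_b)
    also have "\<dots> = Kw (v @ [l]) q p"
      using snoc Lb by (simp add: Kw_snoc_b conc_rb shH_comm del: rhoL.simps)
    finally show ?thesis .
  next
    case La
    have "Klin (rhoW (v @ [l])) p q = Klin (- concH (monoH [La]) (rhoW v) - scaleH hbar (rhoW v)) p q"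
      using La by (simp add: rhoW_snoc concH_ra1 del: rhoL.simps)
    also have "\<dots> = - Klin (rhoW v) (appH p La) q - scaleH hbar (Klin (rhoW v) p q)"
      using snoc by (simp add: Klin_minus1 Klin_uminus1 Klin_scale1 Klin_cons_a)
    also have "\<dots> = - Kw v q (appH p La) - scaleH hbar (Kw v q p)"
      using snoc by simp
    also have "\<dots> = Kw (v @ [l]) q p"
      using snoc La by (simp add: Kw_snoc_a conc_ra Kw_minus3 Kw_uminus3 Kw_scale3 del: rhoL.simps)
    finally show ?thesis .
  qed
qed

lemma RB_rho:
  assumes "fin Y" "fin S"
  shows "concH (shH (appH Y La) S) (rhoL La) =
    shH (appH Y La) (concH S (rhoL La)) + concH (shH Y (concH S (rhoL La))) (rhoL La)
    + scaleH hbar (shH Y (concH S (rhoL La)))"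
  using assms
  by (simp add: conc_ra shH_lin_simps shH_aa algebra_simps del: rhoL.simps)


declare rhoL.simps(1)[simp del]

lemma conc_m1: "fin Z \<Longrightarrow> concH Z (monoH [l]) = appH Z l" by (simp add: appH_concH)

lemma shW_eq_shH: "shW x y = shH (monoH x) (monoH y)" by simp

lemma star:
  assumes "fin s"
  shows "Klin (shW x y) eH s = Kw x eH (shH (monoH y) s) + Kw y eH (shH (monoH x) s)"
  using assms
proof (induction "length x + length y" arbitrary: x y s rule: less_induct)
  case less
  note fs = less.prems
  have IH: "\<And>x' y' s'. length x' + length y' < length x + length y \<Longrightarrow> fin s' \<Longrightarrow>
     Klin (shW x' y') eH s' = Kw x' eH (shH (monoH y') s') + Kw y' eH (shH (monoH x') s')"
    using less by blast
  show ?case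
  proof (cases "x = []")
    case True
    then show ?thesis using fs by (simp add: eH_def[symmetric])
  next
    case xne: False
    show ?thesis
    proof (cases "y = []")
      case True
      then show ?thesis using fs by (simp add: eH_def[symmetric])
    next
      case yne: False
      obtain x' l1 where x: "x = x' @ [l1]" using xne by (metis rev_exhaust)
      obtain y' l2 where y: "y = y' @ [l2]" using yne by (metis rev_exhaust)
      show ?thesis
      proof (cases l1)
        case Lb
        have sx: "shW x y = appH (shW x' y) Lb" using x Lb by (simp add: shW_b1)
        have "Klin (shW x y) eH s = shH (shW x' y) s + Klin (shW x' y) eH (appH s Lb)"
          unfolding sx using fs by (simp add: Klin_app_b conc_rb conc_m1)
        also have "\<dots> = shH (shW x' y) s + Kw x' eH (shH (monoH y) (appH s Lb))
            + Kw y eH (shH (monoH x') (appH s Lb))"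
          using IH[of x' y "appH s Lb"] x fs by (simp add: add.assoc)
        also have "\<dots> = Kw x eH (shH (monoH y) s) + Kw y eH (shH (monoH x) s)"
        proof -
          have a1: "shH (shW x' y) s = shH (monoH x') (shH (monoH y) s)"
            using fs by (simp add: shH_assoc[symmetric])
          have a2: "shH (monoH x) s = shH (monoH x') (appH s Lb)"
            using fs x Lb shH_b1[of "monoH x'" s] by (simp add: shH_b2)
          show ?thesis unfolding x Lb a2[unfolded x Lb]
            using fs by (simp add: Kw_snoc_b conc_rb conc_m1 shH_b2 a1 eH_def[symmetric] add_ac del: rhoL.simps)
        qed
        finally show ?thesis .
      next
        case La1: La
        show ?thesis
        proof (cases l2)
          case Lb
          have sy: "shW x y = appH (shW x y') Lb" using y Lb by (simp add: shW_b2)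
          have "Klin (shW x y) eH s = shH (shW x y') s + Klin (shW x y') eH (appH s Lb)"
            unfolding sy using fs by (simp add: Klin_app_b conc_rb conc_m1)
          also have "\<dots> = shH (shW x y') s + Kw x eH (shH (monoH y') (appH s Lb))
              + Kw y' eH (shH (monoH x) (appH s Lb))"
            using IH[of x y' "appH s Lb"] y fs by (simp add: add.assoc)
          also have "\<dots> = Kw x eH (shH (monoH y) s) + Kw y eH (shH (monoH x) s)"
          proof -
            have a1: "shH (shW x y') s = shH (monoH y') (shH (monoH x) s)"
              using fs by (simp add: shH_assoc[symmetric] shW_comm)
            have a2: "shH (monoH y) s = shH (monoH y') (appH s Lb)"
              using fs y Lb shH_b1[of "monoH y'" s] by (simp add: shH_b2)
            show ?thesis unfolding y Lb a2[unfolded y Lb]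
              using fs by (simp add: Kw_snoc_b conc_rb conc_m1 shH_b2 a1 eH_def[symmetric] add_ac del: rhoL.simps)
          qed
          finally show ?thesis .
        next
          case La2: La
          define st where "st = concH s (rhoL La)"
          have fst[simp]: "fin st" using fs by (simp add: st_def)
          have sxy: "shW x y = appH (shW x y' + shW x' y + scaleH hbar (shW x' y')) La"
            using x y La1 La2 shW_aa[of x' y'] by simp
          have "Klin (shW x y) eH s = Klin (shW x y') eH st + Klin (shW x' y) eH st
              + scaleH hbar (Klin (shW x' y') eH st)"
            unfolding sxy st_def using fs by (simp add: Klin_app_a Klin_add1 Klin_scale1)
          also have "\<dots> = (Kw x eH (shH (monoH y') st) + Kw y' eH (shH (monoH x) st))
              + (Kw x' eH (shH (monoH y) st) + Kw y eH (shH (monoH x') st))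
              + scaleH hbar (Kw x' eH (shH (monoH y') st) + Kw y' eH (shH (monoH x') st))"
            using IH[of x y' st] IH[of x' y st] IH[of x' y' st] x y by simp
          also have "\<dots> = Kw x' eH (concH (shH (monoH y') st) (rhoL La) + shH (monoH y) st
                 + scaleH hbar (shH (monoH y') st))
              + Kw y' eH (concH (shH (monoH x') st) (rhoL La) + shH (monoH x) st
                 + scaleH hbar (shH (monoH x') st))"
            using x y La1 La2 by (simp add: Kw_snoc_a Kw_add3 Kw_scale3 add_ac del: rhoL.simps)
          also have "\<dots> = Kw x' eH (concH (shH (monoH y) s) (rhoL La))
              + Kw y' eH (concH (shH (monoH x) s) (rhoL La))"
          proof -
            have r1: "concH (shH (monoH y) s) (rhoL La) = concH (shH (monoH y') st) (rhoL La) + shH (monoH y) st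
                 + scaleH hbar (shH (monoH y') st)"
              using RB_rho[of "monoH y'" s] fs y La2 by (simp add: st_def add_ac del: rhoL.simps)
            have r2: "concH (shH (monoH x) s) (rhoL La) = concH (shH (monoH x') st) (rhoL La) + shH (monoH x) st
                 + scaleH hbar (shH (monoH x') st)"
              using RB_rho[of "monoH x'" s] fs x La1 by (simp add: st_def add_ac del: rhoL.simps)
            show ?thesis by (simp only: r1 r2)
          qed
          also have "\<dots> = Kw x eH (shH (monoH y) s) + Kw y eH (shH (monoH x) s)"
            using x y La1 La2 fs by (simp add: Kw_snoc_a del: rhoL.simps)
          finally show ?thesis .
        qed
      qed
    qed
  qed
qed


definition Fw :: "letter list \<Rightarrow> H" where
  "Fw u = monoH u + Kw u eH (monoH [Lb])"

fun psih :: "letter list \<Rightarrow> H" where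
  "psih [] = eH"
| "psih (Lb # y) = concH (monoH [Lb]) (rhoW y)"
| "psih (La # y) = 0"

lemma fin_psih[simp]: "fin (psih y)" by (cases y rule: psih.cases) auto
lemma fin_Fw[simp]: "fin (Fw u)" by (simp add: Fw_def)

definition isA :: "letter list \<Rightarrow> bool" where
  "isA u \<longleftrightarrow> u = [] \<or> hd u = Lb"

lemma lin_Fw: "fin Z \<Longrightarrow> lin Fw Z = Z + Klin Z eH (monoH [Lb])"
proof -
  assume "fin Z"
  have "lin Fw Z = lin (\<lambda>u. monoH u + Kw u eH (monoH [Lb])) Z" by (simp add: Fw_def[abs_def])
  also have "\<dots> = lin monoH Z + Klin Z eH (monoH [Lb])" unfolding Klin_def by (rule lin_fadd)
  finally show ?thesis using \<open>fin Z\<close> by (simp add: lin_id)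
qed

lemma core_word:
  assumes "isA y"
  shows "lin Fw (shW x y) = lin Fw (concH (monoH x) (psih y))"
proof (cases y)
  case Nil
  then show ?thesis by (simp add: eH_def[symmetric])
next
  case (Cons l y')
  then have y: "y = Lb # y'" using assms by (simp add: isA_def)
  have sy: "shW y [Lb] = monoH (y @ [Lb])"
    using shW_b2[of y "[]"] by simp
  have sx: "shW x [Lb] = monoH (x @ [Lb])"
    using shW_b2[of x "[]"] by simp
  define Z where "Z = concH (monoH (x @ [Lb])) (rhoW y')"
  have fZ[simp]: "fin Z" by (simp add: Z_def)
  have Zc: "concH (monoH x) (psih y) = Z"
    unfolding y Z_def by (simp add: concH_assoc[symmetric])
  have L: "lin Fw (shW x y) = shW x y + Kw x eH (monoH (y @ [Lb])) + Kw y eH (monoH (x @ [Lb]))"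
    by (simp add: lin_Fw star sy sx add.assoc)
  have "Klin Z eH (monoH [Lb]) = Kw (x @ [Lb]) eH (monoH y) + Kw y' (monoH [Lb]) (monoH (x @ [Lb]))"
    unfolding Z_def by (simp add: Klin_concat Klin_swap y eH_def[symmetric])
  also have "\<dots> = shW x y + Kw x eH (monoH (y @ [Lb])) + Kw y' (monoH [Lb]) (monoH (x @ [Lb]))"
    by (simp add: Kw_snoc_b conc_m1 eH_def[symmetric])
  finally have K1: "Klin Z eH (monoH [Lb]) = shW x y + Kw x eH (monoH (y @ [Lb])) + Kw y' (monoH [Lb]) (monoH (x @ [Lb]))" .
  have K2: "Kw y eH (monoH (x @ [Lb])) = Z + Kw y' (monoH [Lb]) (monoH (x @ [Lb]))"
    unfolding y Z_def by (simp add: eH_def[symmetric] appH_e)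
  show ?thesis unfolding Zc L using K1 K2 by (simp add: lin_Fw add_ac)
qed

lemma core:
  assumes "fin X" "fin Y" "\<And>v. v \<in> suppH Y \<Longrightarrow> isA v"
  shows "lin Fw (shH X Y) = lin Fw (concH X (lin psih Y))"
proof -
  have "lin Fw (shH X Y) = lin (\<lambda>u. lin (\<lambda>v. lin Fw (shW u v)) Y) X"
    unfolding shH_form using assms by (simp add: lin_comp fin_lin)
  also have "\<dots> = lin (\<lambda>u. lin (\<lambda>v. lin Fw (concH (monoH u) (psih v))) Y) X"
    by (intro lin_cong) (simp add: core_word assms)
  also have "\<dots> = lin Fw (concH X (lin psih Y))"
    using assms by (simp add: concH_left_expand[of X] concH_lin2 lin_comp fin_lin)
  finally show ?thesis .
qed


lemma wordA_Nil[simp]: "wordA [] = []" by (simp add: wordA_def)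
lemma wordA_Cons[simp]: "wordA (k # \<beta>) = Lb # replicate k La @ wordA \<beta>" by (simp add: wordA_def)
lemma wordA_append[simp]: "wordA (\<alpha> @ \<beta>) = wordA \<alpha> @ wordA \<beta>" by (simp add: wordA_def)

lemma isA_Nil[simp]: "isA []" by (simp add: isA_def)
lemma isA_Cons[simp]: "isA (l # w) \<longleftrightarrow> l = Lb" by (simp add: isA_def)
lemma isA_wordA[simp]: "isA (wordA \<alpha>)" by (cases \<alpha>) auto

lemma reps_isA_eq:
  assumes "replicate k La @ w1 = replicate k' La @ w2" "isA w1" "isA w2"
  shows "k = k' \<and> w1 = w2"
  using assms
proof (induction k arbitrary: k')
  case 0
  then show ?case by (cases k') (auto simp: isA_def)
next
  case (Suc k)
  then show ?case by (cases k') (auto simp: isA_def)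
qed

lemma wordA_inj: "wordA \<alpha> = wordA \<beta> \<Longrightarrow> \<alpha> = \<beta>"
proof (induction \<alpha> arbitrary: \<beta>)
  case Nil
  then show ?case by (cases \<beta>) auto
next
  case (Cons k \<alpha>)
  then obtain k' \<beta>' where b: "\<beta> = k' # \<beta>'" by (cases \<beta>) auto
  with Cons.prems have "replicate k La @ wordA \<alpha> = replicate k' La @ wordA \<beta>'" by simp
  then have "k = k' \<and> wordA \<alpha> = wordA \<beta>'" by (rule reps_isA_eq) auto
  then show ?case using Cons.IH b by auto
qed

lemma inj_wordA: "inj wordA" by (auto intro: injI wordA_inj)

lemma isA_wordA_ex: "isA u \<Longrightarrow> \<exists>\<alpha>. wordA \<alpha> = u"
proof (induction "length u" arbitrary: u rule: less_induct)
  case less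
  show ?case
  proof (cases u)
    case Nil then show ?thesis by (intro exI[of _ "[]"]) simp
  next
    case (Cons l r)
    with less.prems have l: "l = Lb" by simp
    define k where "k = length (takeWhile (\<lambda>x. x = La) r)"
    define rest where "rest = dropWhile (\<lambda>x. x = La) r"
    have tw: "takeWhile (\<lambda>x. x = La) r = replicate k La"
      unfolding k_def by (metis (mono_tags, lifting) replicate_length_same set_takeWhileD)
    have r: "r = replicate k La @ rest" using tw rest_def takeWhile_dropWhile_id by metis
    have "isA rest"
    proof (cases rest)
      case (Cons x xs)
      have "x \<noteq> La" using Cons rest_def hd_dropWhile[of "\<lambda>x. x = La" r] by (metis list.discI list.sel(1))
      then show ?thesis using Cons by (cases x) auto
    qed simp
    moreover have "length rest < length u" using Cons r by simp
    ultimately obtain \<alpha> where "wordA \<alpha> = rest" using less by blast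
    then show ?thesis using Cons l r by (intro exI[of _ "k # \<alpha>"]) simp
  qed
qed

fun zcr :: "letter list \<Rightarrow> nat" where
  "zcr [] = 0"
| "zcr (Lb # r) = Suc (zcr r)"
| "zcr [La] = 0"
| "zcr (La # Lb # r) = zcr r"
| "zcr (La # La # r) = zcr (La # r)"

definition zc :: "letter list \<Rightarrow> nat" where "zc u = zcr (rev u)"

definition nz :: "nat list \<Rightarrow> nat" where "nz \<alpha> = length (filter (\<lambda>k. k = 0) \<alpha>)"

lemma zc_Nil[simp]: "zc [] = 0" by (simp add: zc_def)
lemma zc_snoc_b[simp]: "zc (w @ [Lb]) = Suc (zc w)" by (simp add: zc_def)
lemma zc_single_b[simp]: "zc [Lb] = 1" by (simp add: zc_def)
lemma zc_snoc_a: "zc (w @ [La]) = (if w \<noteq> [] \<and> last w = Lb then zc w - 1 else zc w)"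
proof (cases w rule: rev_cases)
  case Nil then show ?thesis by (simp add: zc_def)
next
  case (snoc w' l)
  then show ?thesis by (cases l) (simp_all add: zc_def)
qed

lemma zc_pos: "w \<noteq> [] \<Longrightarrow> last w = Lb \<Longrightarrow> zc w \<ge> 1"
  by (cases w rule: rev_cases) auto

lemma zc_b_reps: "zc (w @ Lb # replicate k La) = (if k = 0 then Suc (zc w) else zc w)"
proof (induction k)
  case 0 then show ?case by simp
next
  case (Suc k)
  have e: "w @ Lb # replicate (Suc k) La = (w @ Lb # replicate k La) @ [La]"
    by (simp add: replicate_append_same[symmetric])
  show ?case
  proof (cases k)
    case 0 then show ?thesis using e zc_snoc_a[of "w @ [Lb]"] by simp
  next
    case (Suc k')
    have l: "last (w @ Lb # replicate k La) = La" using Suc by simp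
    have "zc (w @ Lb # replicate (Suc k) La) = zc (w @ Lb # replicate k La)"
      unfolding e using zc_snoc_a[of "w @ Lb # replicate k La"] l by simp
    then show ?thesis using Suc.IH Suc by simp
  qed
qed

lemma zc_wordA[simp]: "zc (wordA \<alpha>) = nz \<alpha>"
proof (induction \<alpha> rule: rev_induct)
  case Nil then show ?case by (simp add: nz_def)
next
  case (snoc k \<alpha>)
  have "wordA (\<alpha> @ [k]) = wordA \<alpha> @ Lb # replicate k La" by simp
  then show ?case using snoc by (simp add: zc_b_reps nz_def)
qed

lemma zc_append: "isA v \<Longrightarrow> zc (u @ v) = zc u + zc v"
proof (induction v rule: rev_induct)
  case Nil then show ?case by simp
next
  case (snoc l v)
  show ?case
  proof (cases "v = []")
    case True
    then show ?thesis using snoc.prems by (simp add: isA_def)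
  next
    case False
    then have iv: "isA v" using snoc.prems by (cases v) auto
    show ?thesis
    proof (cases l)
      case Lb then show ?thesis using snoc.IH[OF iv] zc_snoc_b[of "u @ v"] by simp
    next
      case La
      have "last v = Lb \<Longrightarrow> zc v \<ge> 1" using zc_pos False by blast
      then show ?thesis using snoc.IH[OF iv] False La zc_snoc_a[of "u @ v"] zc_snoc_a[of v]
        by simp
    qed
  qed
qed


declare rhoL.simps(1)[simp del]

definition CAp :: "H \<Rightarrow> bool" where
  "CAp X \<longleftrightarrow> fin X \<and> (\<forall>u. X u \<noteq> 0 \<longrightarrow> isA u) \<and> (\<forall>u. hbar ^ zc u dvd X u)"

lemma hbar_nz[simp]: "hbar \<noteq> 0" by (simp add: hbar_def)

lemma D_left: "hbar ^ m dvd X \<Longrightarrow> m' \<le> m \<Longrightarrow> hbar ^ m' dvd X"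
  using le_imp_power_dvd dvd_trans by blast
lemma D_right: "hbar ^ m dvd hbar ^ n * c \<Longrightarrow> n \<le> n' \<Longrightarrow> hbar ^ m dvd hbar ^ n' * (c :: rat poly)"
proof -
  assume a: "hbar ^ m dvd hbar ^ n * c" "n \<le> n'"
  have "hbar ^ n' = hbar ^ (n' - n) * hbar ^ n" using a(2) by (simp flip: power_add)
  then have eq: "hbar ^ n' * c = hbar ^ (n' - n) * (hbar ^ n * c)" by (simp add: mult.assoc)
  show ?thesis unfolding eq using a(1) by (rule dvd_mult)
qed
lemma D_suc: "hbar ^ m dvd hbar ^ n * c \<Longrightarrow> hbar ^ Suc m dvd hbar ^ Suc n * (c :: rat poly)"
  by (simp add: mult.assoc)
lemma D_cancel: "hbar ^ Suc m dvd hbar ^ Suc n * c \<Longrightarrow> hbar ^ m dvd hbar ^ n * (c :: rat poly)"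
  by (simp add: mult.assoc)

lemma appH_apply: "appH X l t = (if t \<noteq> [] \<and> last t = l then X (butlast t) else 0)"
  by (simp add: appH_def)

lemma appH_nz: "appH X l t \<noteq> 0 \<Longrightarrow> \<exists>t'. t = t' @ [l] \<and> X t' \<noteq> 0"
  by (auto simp: appH_def split: if_splits intro!: exI[of _ "butlast t"])

lemma shW_nil_supp: "shW p q [] \<noteq> 0 \<Longrightarrow> p = [] \<and> q = []"
proof (cases p rule: rev_cases)
  case Nil
  then show "shW p q [] \<noteq> 0 \<Longrightarrow> p = [] \<and> q = []" by (auto simp: monoH_def split: if_splits)
next
  case (snoc p' l)
  assume n: "shW p q [] \<noteq> 0"
  show "p = [] \<and> q = []"
  proof (cases q rule: rev_cases)
    case Nil then show ?thesis using n snoc by (auto simp: monoH_def split: if_splits)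
  next
    case snoc2: (snoc q' l')
    have "shW p q [] = 0"
    proof (cases l)
      case Lb then show ?thesis using snoc by (simp add: shW_b1 appH_apply)
    next
      case La
      show ?thesis
      proof (cases l')
        case Lb then show ?thesis using snoc2 by (simp add: shW_b2 appH_apply)
      next
        case La': La
        then show ?thesis using snoc snoc2 La by (simp add: shW_aa appH_apply scaleH_def)
      qed
    qed
    then show ?thesis using n by simp
  qed
qed

lemma shW_last_b1: "shW (u @ [Lb]) v t \<noteq> 0 \<Longrightarrow> t \<noteq> [] \<and> last t = Lb"
  by (simp add: shW_b1 appH_apply split: if_splits)
lemma shW_last_b2: "shW u (v @ [Lb]) t \<noteq> 0 \<Longrightarrow> t \<noteq> [] \<and> last t = Lb"
  by (simp add: shW_b2 appH_apply split: if_splits)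

lemma isA_snoc: "isA (t @ [l]) \<longleftrightarrow> (t = [] \<and> l = Lb) \<or> (t \<noteq> [] \<and> isA t)"
  by (cases t) (auto simp: isA_def)

lemma shW_isA: "isA u \<Longrightarrow> isA v \<Longrightarrow> shW u v t \<noteq> 0 \<Longrightarrow> isA t"
proof (induction "length u + length v" arbitrary: u v t rule: less_induct)
  case less
  show ?case
  proof (cases "u = [] \<or> v = []")
    case True
    then show ?thesis using less.prems by (auto simp: monoH_def split: if_splits)
  next
    case False
    then obtain u' l1 v' l2 where u: "u = u' @ [l1]" and v: "v = v' @ [l2]" by (metis rev_exhaust)
    have iu': "u' \<noteq> [] \<Longrightarrow> isA u'" using less.prems(1) u by (simp add: isA_snoc)
    have iv': "v' \<noteq> [] \<Longrightarrow> isA v'" using less.prems(2) v by (simp add: isA_snoc)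
    have iu'0: "isA u'" using iu' by (cases "u' = []") auto
    have iv'0: "isA v'" using iv' by (cases "v' = []") auto
    show ?thesis
    proof (cases l1)
      case Lb
      have "appH (shW u' v) Lb t \<noteq> 0" using less.prems(3) u Lb by (simp add: shW_b1)
      then obtain t' where t: "t = t' @ [Lb]" "shW u' v t' \<noteq> 0" using appH_nz by blast
      have "isA t'" using less(1)[of u' v t'] u t iu'0 less.prems(2) by simp
      then show ?thesis using t by (auto simp: isA_snoc)
    next
      case La1: La
      show ?thesis
      proof (cases l2)
        case Lb
        have "appH (shW u v') Lb t \<noteq> 0" using less.prems(3) v Lb by (simp add: shW_b2)
        then obtain t' where t: "t = t' @ [Lb]" "shW u v' t' \<noteq> 0" using appH_nz by blast
        have "isA t'" using less(1)[of u v' t'] v t iv'0 less.prems(1) by simp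
        then show ?thesis using t by (auto simp: isA_snoc)
      next
        case La2: La
        have u'ne: "u' \<noteq> []" using less.prems(1) u La1 by (auto simp: isA_def)
        have v'ne: "v' \<noteq> []" using less.prems(2) v La2 by (auto simp: isA_def)
        have "appH (shW u v' + shW u' v + scaleH hbar (shW u' v')) La t \<noteq> 0"
          using less.prems(3) u v La1 La2 shW_aa[of u' v'] by simp
        then obtain t' where t: "t = t' @ [La]"
          and nz: "(shW u v' + shW u' v + scaleH hbar (shW u' v')) t' \<noteq> 0" using appH_nz by blast
        have "shW u v' t' \<noteq> 0 \<or> shW u' v t' \<noteq> 0 \<or> shW u' v' t' \<noteq> 0"
          using nz by (auto simp: scaleH_def)
        then have "isA t' \<and> t' \<noteq> []"
        proof (elim disjE)
          assume h: "shW u v' t' \<noteq> 0"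
          then show ?thesis using less(1)[of u v' t'] v less.prems(1) iv' v'ne shW_nil_supp[of u v'] by auto
        next
          assume h: "shW u' v t' \<noteq> 0"
          then show ?thesis using less(1)[of u' v t'] u less.prems(2) iu' u'ne shW_nil_supp[of u' v] by auto
        next
          assume h: "shW u' v' t' \<noteq> 0"
          then show ?thesis using less(1)[of u' v' t'] u v iu' iv' u'ne v'ne shW_nil_supp[of u' v'] by auto
        qed
        then show ?thesis using t by (auto simp: isA_snoc)
      qed
    qed
  qed
qed


lemma Dgen:
  assumes "hbar ^ a dvd hbar ^ b * c" "a' + b \<le> a + b'"
  shows "hbar ^ a' dvd hbar ^ b' * (c :: rat poly)"
proof (cases "b \<le> a")
  case True
  have "hbar ^ b * hbar ^ (a - b) dvd hbar ^ b * c" using assms(1) True by (simp flip: power_add)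
  then have "hbar ^ (a - b) dvd c" by (simp add: mult_dvd_mono)
  then obtain d where d: "c = hbar ^ (a - b) * d" by (auto elim: dvdE)
  have "hbar ^ b' * c = hbar ^ (b' + (a - b)) * d" by (simp add: d power_add mult.assoc)
  moreover have "hbar ^ a' dvd hbar ^ (b' + (a - b))" using assms(2) True by (intro le_imp_power_dvd) simp
  ultimately show ?thesis by simp
next
  case False
  then have "a' \<le> b'" using assms(2) by simp
  then have "hbar ^ a' dvd hbar ^ b'" by (rule le_imp_power_dvd)
  then show ?thesis by simp
qed

lemma zc_snoc_a_b: "t \<noteq> [] \<Longrightarrow> last t = Lb \<Longrightarrow> Suc (zc (t @ [La])) = zc t"
  using zc_snoc_a[of t] zc_pos[of t] by simp
lemma zc_snoc_a_nb: "\<not> (t \<noteq> [] \<and> last t = Lb) \<Longrightarrow> zc (t @ [La]) = zc t"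
  using zc_snoc_a[of t] by (auto split: if_splits)

lemma appH_cases: "appH X l t = 0 \<or> (\<exists>t'. t = t' @ [l] \<and> appH X l t = X t')"
  by (cases "t \<noteq> [] \<and> last t = l") (auto simp: appH_apply intro!: exI[of _ "butlast t"])

lemma shW_dvd: "hbar ^ zc t dvd hbar ^ (zc u + zc v) * shW u v t"
proof (induction "length u + length v" arbitrary: u v t rule: less_induct)
  case less
  show ?case
  proof (cases "u = [] \<or> v = []")
    case True
    then show ?thesis by (auto simp: monoH_def)
  next
    case False
    then obtain u' l1 v' l2 where u: "u = u' @ [l1]" and v: "v = v' @ [l2]" by (metis rev_exhaust)
    show ?thesis
    proof (cases l1)
      case Lb
      have e: "shW u v t = appH (shW u' v) Lb t" using u Lb by (simp add: shW_b1)
      show ?thesis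
      proof (cases "appH (shW u' v) Lb t = 0")
        case True then show ?thesis using e by simp
      next
        case False
        then obtain t' where t: "t = t' @ [Lb]" "appH (shW u' v) Lb t = shW u' v t'"
          using appH_cases by blast
        have "hbar ^ zc t' dvd hbar ^ (zc u' + zc v) * shW u' v t'" using less u by simp
        then have "hbar ^ Suc (zc t') dvd hbar ^ Suc (zc u' + zc v) * shW u' v t'" by (rule D_suc)
        moreover have "shW u v t = shW u' v t'" using e t(2) by simp
        moreover have "zc t = Suc (zc t')" using t(1) by simp
        moreover have "zc u = Suc (zc u')" using u Lb by simp
        ultimately show ?thesis by simp
      qed
    next
      case La1: La
      show ?thesis
      proof (cases l2)
        case Lb
        have e: "shW u v t = appH (shW u v') Lb t" using v Lb by (simp add: shW_b2)
        show ?thesis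
        proof (cases "appH (shW u v') Lb t = 0")
          case True then show ?thesis using e by simp
        next
          case False
          then obtain t' where t: "t = t' @ [Lb]" "appH (shW u v') Lb t = shW u v' t'"
            using appH_cases by blast
          have "hbar ^ zc t' dvd hbar ^ (zc u + zc v') * shW u v' t'" using less v by simp
          then have "hbar ^ Suc (zc t') dvd hbar ^ Suc (zc u + zc v') * shW u v' t'" by (rule D_suc)
          moreover have "shW u v t = shW u v' t'" using e t(2) by simp
          moreover have "zc t = Suc (zc t')" using t(1) by simp
          moreover have "zc v = Suc (zc v')" using v Lb by simp
          ultimately show ?thesis by simp
        qed
      next
        case La2: La
        define A where "A = shW u v'"
        define B where "B = shW u' v"
        define C where "C = shW u' v'"
        have e: "shW u v t = appH (A + B + scaleH hbar C) La t"
          using u v La1 La2 shW_aa[of u' v'] by (simp add: A_def B_def C_def)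
        show ?thesis
        proof (cases "appH (A + B + scaleH hbar C) La t = 0")
          case True then show ?thesis using e by simp
        next
          case False
          then obtain t' where t: "t = t' @ [La]" and e2: "shW u v t = A t' + B t' + hbar * C t'"
            using appH_cases e by (fastforce simp: scaleH_def)
          have IA: "hbar ^ zc t' dvd hbar ^ (zc u + zc v') * A t'" using less v by (simp add: A_def)
          have IB: "hbar ^ zc t' dvd hbar ^ (zc u' + zc v) * B t'" using less u by (simp add: B_def)
          have IC: "hbar ^ zc t' dvd hbar ^ (zc u' + zc v') * C t'" using less u v by (simp add: C_def)
          define bu where "bu = (u' \<noteq> [] \<and> last u' = Lb)"
          define bv where "bv = (v' \<noteq> [] \<and> last v' = Lb)"
          define bt where "bt = (t' \<noteq> [] \<and> last t' = Lb)"
          have zu: "zc u = (if u' \<noteq> [] \<and> last u' = Lb then zc u' - 1 else zc u')"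
            using u La1 zc_snoc_a by simp
          have zv: "zc v = (if v' \<noteq> [] \<and> last v' = Lb then zc v' - 1 else zc v')"
            using v La2 zc_snoc_a by simp
          have zt: "zc t = (if t' \<noteq> [] \<and> last t' = Lb then zc t' - 1 else zc t')"
            using t zc_snoc_a by simp
          have pu: "u' \<noteq> [] \<and> last u' = Lb \<Longrightarrow> zc u' \<ge> 1" using zc_pos by blast
          have pv: "v' \<noteq> [] \<and> last v' = Lb \<Longrightarrow> zc v' \<ge> 1" using zc_pos by blast
          have pt: "t' \<noteq> [] \<and> last t' = Lb \<Longrightarrow> zc t' \<ge> 1" using zc_pos by blast
          have lbA: "A t' \<noteq> 0 \<Longrightarrow> v' \<noteq> [] \<and> last v' = Lb \<Longrightarrow> t' \<noteq> [] \<and> last t' = Lb"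
          proof -
            assume h: "A t' \<noteq> 0" "v' \<noteq> [] \<and> last v' = Lb"
            then have "v' = butlast v' @ [Lb]" by (metis append_butlast_last_id)
            then show ?thesis using h(1) shW_last_b2[of u "butlast v'" t'] unfolding A_def by simp
          qed
          have lbB: "B t' \<noteq> 0 \<Longrightarrow> u' \<noteq> [] \<and> last u' = Lb \<Longrightarrow> t' \<noteq> [] \<and> last t' = Lb"
          proof -
            assume h: "B t' \<noteq> 0" "u' \<noteq> [] \<and> last u' = Lb"
            then have "u' = butlast u' @ [Lb]" by (metis append_butlast_last_id)
            then show ?thesis using h(1) shW_last_b1[of "butlast u'" v t'] unfolding B_def by simp
          qed
          have lbC1: "C t' \<noteq> 0 \<Longrightarrow> u' \<noteq> [] \<and> last u' = Lb \<Longrightarrow> t' \<noteq> [] \<and> last t' = Lb"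
          proof -
            assume h: "C t' \<noteq> 0" "u' \<noteq> [] \<and> last u' = Lb"
            then have "u' = butlast u' @ [Lb]" by (metis append_butlast_last_id)
            then show ?thesis using h(1) shW_last_b1[of "butlast u'" v' t'] unfolding C_def by simp
          qed
          have lbC2: "C t' \<noteq> 0 \<Longrightarrow> v' \<noteq> [] \<and> last v' = Lb \<Longrightarrow> t' \<noteq> [] \<and> last t' = Lb"
          proof -
            assume h: "C t' \<noteq> 0" "v' \<noteq> [] \<and> last v' = Lb"
            then have "v' = butlast v' @ [Lb]" by (metis append_butlast_last_id)
            then show ?thesis using h(1) shW_last_b2[of u' "butlast v'" t'] unfolding C_def by simp
          qed
          note zu = zu[folded bu_def] and zv = zv[folded bv_def] and zt = zt[folded bt_def]
          note pu = pu[folded bu_def] and pv = pv[folded bv_def] and pt = pt[folded bt_def]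
          note lbA = lbA[folded bv_def bt_def] and lbB = lbB[folded bu_def bt_def]
          note lbC1 = lbC1[folded bu_def bt_def] and lbC2 = lbC2[folded bv_def bt_def]
          have dA: "hbar ^ zc t dvd hbar ^ (zc u + zc v) * A t'"
          proof (cases "A t' = 0")
            case False
            show ?thesis
            proof (rule Dgen[OF IA])
              show "zc t + (zc u + zc v') \<le> zc t' + (zc u + zc v)"
                using zv zt pv pt lbA[OF False]
                by (cases bv; cases bt) simp_all
            qed
          qed simp
          have dB: "hbar ^ zc t dvd hbar ^ (zc u + zc v) * B t'"
          proof (cases "B t' = 0")
            case False
            show ?thesis
            proof (rule Dgen[OF IB])
              show "zc t + (zc u' + zc v) \<le> zc t' + (zc u + zc v)"
                using zu zt pu pt lbB[OF False]
                by (cases bu; cases bt) simp_all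
            qed
          qed simp
          have dC: "hbar ^ zc t dvd hbar ^ (zc u + zc v) * (hbar * C t')"
          proof (cases "C t' = 0")
            case False
            have "hbar ^ zc t dvd hbar ^ (Suc (zc u + zc v)) * C t'"
            proof (rule Dgen[OF IC])
              show "zc t + (zc u' + zc v') \<le> zc t' + Suc (zc u + zc v)"
                using zu zv zt pu pv pt lbC1[OF False] lbC2[OF False]
                by (cases bu; cases bv; cases bt) simp_all
            qed
            then show ?thesis by (simp add: mult.assoc mult.left_commute)
          qed simp
          show ?thesis unfolding e2 using dA dB dC by (simp add: distrib_left)
        qed
      qed
    qed
  qed
qed


lemma sum_nz_ex: "(\<Sum>x\<in>A. f x) \<noteq> (0::'b::comm_monoid_add) \<Longrightarrow> \<exists>x\<in>A. f x \<noteq> 0"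
  by (meson sum.neutral)

lemma shH_apply: "shH X Y t = (\<Sum>u\<in>suppH X. \<Sum>v\<in>suppH Y. X u * Y v * shW u v t)"
  by (simp add: shH_def bilH_def)
lemma concH_apply: "concH X Y t = (\<Sum>u\<in>suppH X. \<Sum>v\<in>suppH Y. X u * Y v * monoH (u @ v) t)"
  by (simp add: concH_def bilH_def)

lemma CAp_shH:
  assumes "CAp X" "CAp Y" shows "CAp (shH X Y)"
  unfolding CAp_def
proof (intro conjI allI impI)
  show "fin (shH X Y)" using assms by (simp add: CAp_def)
next
  fix t assume "shH X Y t \<noteq> 0"
  then obtain u v where "u \<in> suppH X" "v \<in> suppH Y" "X u * Y v * shW u v t \<noteq> 0"
    unfolding shH_apply by (blast dest: sum_nz_ex)
  then show "isA t" using assms shW_isA[of u v t] by (auto simp: CAp_def suppH_def)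
next
  fix t
  show "hbar ^ zc t dvd shH X Y t" unfolding shH_apply
  proof (intro dvd_sum)
    fix u v
    obtain a where a: "X u = hbar ^ zc u * a" using assms unfolding CAp_def by (meson dvdE)
    obtain b where b: "Y v = hbar ^ zc v * b" using assms unfolding CAp_def by (meson dvdE)
    have eq: "X u * Y v * shW u v t = (a * b) * (hbar ^ (zc u + zc v) * shW u v t)"
      unfolding a b by (simp add: power_add algebra_simps)
    show "hbar ^ zc t dvd X u * Y v * shW u v t" unfolding eq by (rule dvd_mult) (rule shW_dvd)
  qed
qed

lemma CAp_concH:
  assumes "CAp X" "CAp Y" shows "CAp (concH X Y)"
  unfolding CAp_def
proof (intro conjI allI impI)
  show "fin (concH X Y)" using assms by (simp add: CAp_def)
next
  fix t assume "concH X Y t \<noteq> 0"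
  then obtain u v where "u \<in> suppH X" "v \<in> suppH Y" "X u * Y v * monoH (u @ v) t \<noteq> 0"
    unfolding concH_apply by (blast dest: sum_nz_ex)
  then have "isA u" "isA v" "t = u @ v" using assms by (auto simp: CAp_def suppH_def monoH_def split: if_splits)
  then show "isA t" by (cases u) (auto simp: isA_def)
next
  fix t
  show "hbar ^ zc t dvd concH X Y t" unfolding concH_apply
  proof (intro dvd_sum)
    fix u v
    show "hbar ^ zc t dvd X u * Y v * monoH (u @ v) t"
    proof (cases "t = u @ v \<and> X u \<noteq> 0 \<and> Y v \<noteq> 0")
      case True
      then have "isA v" using assms by (auto simp: CAp_def)
      then have z: "zc t = zc u + zc v" using True zc_append by simp
      obtain a where a: "X u = hbar ^ zc u * a" using assms unfolding CAp_def by (meson dvdE)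
      obtain b where b: "Y v = hbar ^ zc v * b" using assms unfolding CAp_def by (meson dvdE)
      have "X u * Y v * monoH (u @ v) t = hbar ^ zc t * (a * b)"
        using True unfolding z a b by (simp add: power_add monoH_def algebra_simps)
      then show ?thesis by simp
    next
      case False
      then show ?thesis by (auto simp: monoH_def)
    qed
  qed
qed

lemma CAp_add: "CAp X \<Longrightarrow> CAp Y \<Longrightarrow> CAp (X + Y)"
  unfolding CAp_def
proof (intro conjI allI impI)
  fix u assume a: "fin X \<and> (\<forall>u. X u \<noteq> 0 \<longrightarrow> isA u) \<and> (\<forall>u. hbar ^ zc u dvd X u)"
    "fin Y \<and> (\<forall>u. Y u \<noteq> 0 \<longrightarrow> isA u) \<and> (\<forall>u. hbar ^ zc u dvd Y u)"
  {
    assume "(X + Y) u \<noteq> 0"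
    then have "X u \<noteq> 0 \<or> Y u \<noteq> 0" by auto
    then show "isA u" using a by blast
  }
  show "hbar ^ zc u dvd (X + Y) u" using a by (simp add: dvd_add)
qed auto
lemma CAp_uminus: "CAp X \<Longrightarrow> CAp (- X)"
  unfolding CAp_def by auto
lemma CAp_minus: "CAp X \<Longrightarrow> CAp Y \<Longrightarrow> CAp (X - Y)"
  using CAp_add[of X "- Y"] CAp_uminus[of Y] by simp
lemma CAp_scale: "CAp X \<Longrightarrow> CAp (scaleH c X)"
  unfolding CAp_def
proof (intro conjI allI impI)
  assume a: "fin X \<and> (\<forall>u. X u \<noteq> 0 \<longrightarrow> isA u) \<and> (\<forall>u. hbar ^ zc u dvd X u)"
  then show "fin (scaleH c X)" by simp
  fix u
  show "scaleH c X u \<noteq> 0 \<Longrightarrow> isA u" using a by (auto simp: scaleH_def)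
  show "hbar ^ zc u dvd scaleH c X u" using a by (simp add: scaleH_def)
qed
lemma CAp_eH: "CAp eH"
  unfolding CAp_def
proof (intro conjI allI impI)
  show "fin eH" by simp
qed (auto simp: eH_def monoH_def split: if_splits)

lemma CAp_sumf:
  assumes "finite S" "\<And>a. a \<in> S \<Longrightarrow> CAp (f a)"
  shows "CAp (\<lambda>t. \<Sum>a\<in>S. c a * f a t)"
  unfolding CAp_def
proof (intro conjI allI impI)
  have "suppH (\<lambda>t. \<Sum>a\<in>S. c a * f a t) \<subseteq> (\<Union>a\<in>S. suppH (f a))"
  proof
    fix x assume "x \<in> suppH (\<lambda>t. \<Sum>a\<in>S. c a * f a t)"
    then have "(\<Sum>a\<in>S. c a * f a x) \<noteq> 0" by (simp add: suppH_def)
    then obtain a where "a \<in> S" "c a * f a x \<noteq> 0" using sum_nz_ex by blast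
    then show "x \<in> (\<Union>a\<in>S. suppH (f a))" by (auto simp: suppH_def)
  qed
  moreover have "finite (\<Union>a\<in>S. suppH (f a))" using assms by (auto simp: CAp_def fin_def)
  ultimately show "fin (\<lambda>t. \<Sum>a\<in>S. c a * f a t)" unfolding fin_def by (rule finite_subset)
next
  fix t assume "(\<Sum>a\<in>S. c a * f a t) \<noteq> 0"
  then obtain a where "a \<in> S" "c a * f a t \<noteq> 0" using sum_nz_ex by blast
  then have "a \<in> S" "f a t \<noteq> 0" by auto
  then show "isA t" using assms by (auto simp: CAp_def)
next
  fix t show "hbar ^ zc t dvd (\<Sum>a\<in>S. c a * f a t)"
    using assms by (auto intro!: dvd_sum simp: CAp_def)
qed

lemma embA_apply: "embA \<alpha> t = (if t = wordA \<alpha> then hbar ^ nz \<alpha> else 0)"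
  by (simp add: embA_def scaleH_def monoH_def nz_def)

lemma CAp_embA: "CAp (embA \<alpha>)"
  unfolding CAp_def
proof (intro conjI allI impI)
  show "fin (embA \<alpha>)" by (simp add: embA_def)
qed (auto simp: embA_apply split: if_splits)

lemma Arep_CAp: "Arep X c \<Longrightarrow> CAp X"
  unfolding Arep_def using CAp_sumf[of "{\<alpha>. c \<alpha> \<noteq> 0}" embA c] CAp_embA by auto

lemma Arep_val: "Arep X c \<Longrightarrow> X (wordA \<alpha>) = c \<alpha> * hbar ^ nz \<alpha>"
proof -
  assume A: "Arep X c"
  have "X (wordA \<alpha>) = (\<Sum>\<beta>\<in>{\<alpha>. c \<alpha> \<noteq> 0}. c \<beta> * embA \<beta> (wordA \<alpha>))"
    using A by (simp add: Arep_def)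
  also have "\<dots> = (\<Sum>\<beta>\<in>{\<alpha>. c \<alpha> \<noteq> 0}. if \<beta> = \<alpha> then c \<beta> * hbar ^ nz \<beta> else 0)"
    by (intro sum.cong) (auto simp: embA_apply dest: wordA_inj)
  also have "\<dots> = c \<alpha> * hbar ^ nz \<alpha>"
    using A by (simp add: Arep_def sum.delta)
  finally show ?thesis .
qed

definition cX :: "H \<Rightarrow> nat list \<Rightarrow> rat poly" where
  "cX X \<alpha> = X (wordA \<alpha>) div hbar ^ nz \<alpha>"

lemma Arep_unique: "Arep X c \<Longrightarrow> c = cX X"
  by (rule ext) (simp add: cX_def Arep_val)

lemma cX_mult: "CAp X \<Longrightarrow> cX X \<alpha> * hbar ^ nz \<alpha> = X (wordA \<alpha>)"
proof -
  assume "CAp X"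
  then have "hbar ^ zc (wordA \<alpha>) dvd X (wordA \<alpha>)" unfolding CAp_def by blast
  then have "hbar ^ nz \<alpha> dvd X (wordA \<alpha>)" by simp
  then show ?thesis unfolding cX_def by (rule dvd_div_mult_self)
qed

lemma cX_nz_iff: "CAp X \<Longrightarrow> cX X \<alpha> \<noteq> 0 \<longleftrightarrow> X (wordA \<alpha>) \<noteq> 0"
  using cX_mult[of X \<alpha>] by (metis hbar_nz mult_eq_0_iff power_not_zero)

lemma CAp_Arep:
  assumes "CAp X" shows "Arep X (cX X)"
  unfolding Arep_def
proof (intro conjI)
  have "{\<alpha>. cX X \<alpha> \<noteq> 0} \<subseteq> wordA -` suppH X"
    using cX_nz_iff[OF assms] by (auto simp: suppH_def)
  moreover have "finite (wordA -` suppH X)"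
    using assms inj_wordA by (auto simp: CAp_def fin_def intro: finite_vimageI)
  ultimately show finS: "finite {\<alpha>. cX X \<alpha> \<noteq> 0}" by (rule finite_subset)
  show "X = (\<lambda>t. \<Sum>\<alpha>\<in>{\<alpha>. cX X \<alpha> \<noteq> 0}. cX X \<alpha> * embA \<alpha> t)"
  proof
    fix t
    show "X t = (\<Sum>\<alpha>\<in>{\<alpha>. cX X \<alpha> \<noteq> 0}. cX X \<alpha> * embA \<alpha> t)"
    proof (cases "isA t")
      case True
      then obtain \<alpha>0 where t: "wordA \<alpha>0 = t" using isA_wordA_ex by blast
      have "(\<Sum>\<alpha>\<in>{\<alpha>. cX X \<alpha> \<noteq> 0}. cX X \<alpha> * embA \<alpha> t)
          = (\<Sum>\<alpha>\<in>{\<alpha>. cX X \<alpha> \<noteq> 0}. if \<alpha> = \<alpha>0 then cX X \<alpha> * hbar ^ nz \<alpha> else 0)"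
        by (intro sum.cong) (auto simp: embA_apply t[symmetric] dest: wordA_inj)
      also have "\<dots> = (if cX X \<alpha>0 \<noteq> 0 then cX X \<alpha>0 * hbar ^ nz \<alpha>0 else 0)"
        using sum.delta[OF finS, of \<alpha>0 "\<lambda>\<alpha>. cX X \<alpha> * hbar ^ nz \<alpha>"] by simp
      also have "\<dots> = X t" using cX_mult[OF assms, of \<alpha>0] t by auto
      finally show ?thesis by simp
    next
      case False
      then have "X t = 0" using assms by (auto simp: CAp_def)
      moreover have "\<And>\<alpha>. embA \<alpha> t = 0" using False by (auto simp: embA_apply)
      ultimately show ?thesis by simp
    qed
  qed
qed

lemma CA_iff: "X \<in> CA \<longleftrightarrow> CAp X"
  unfolding CA_def using Arep_CAp CAp_Arep by blast

lemma cA_eq: "CAp X \<Longrightarrow> cA X = cX X"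
  unfolding cA_def using CAp_Arep Arep_unique by (intro the_equality) auto

lemma linA_form: "CAp X \<Longrightarrow> linA f X = (\<lambda>t. \<Sum>\<alpha>\<in>{\<alpha>. cX X \<alpha> \<noteq> 0}. cX X \<alpha> * f \<alpha> t)"
  by (simp add: linA_def cA_eq)

lemma CAp_linA: "CAp X \<Longrightarrow> (\<And>\<alpha>. CAp (f \<alpha>)) \<Longrightarrow> CAp (linA f X)"
  using CAp_Arep[of X] unfolding linA_form Arep_def by (intro CAp_sumf) auto

lemma linA_lin:
  assumes "CAp X" "\<And>\<alpha>. f \<alpha> = scaleH (hbar ^ nz \<alpha>) (g (wordA \<alpha>))"
  shows "linA f X = lin g X"
proof
  fix t
  let ?S = "{\<alpha>. cX X \<alpha> \<noteq> 0}"
  have "linA f X t = (\<Sum>\<alpha>\<in>?S. X (wordA \<alpha>) * g (wordA \<alpha>) t)"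
    unfolding linA_form[OF assms(1)] assms(2)
    by (intro sum.cong) (auto simp: scaleH_def cX_mult[OF assms(1), symmetric] mult.assoc)
  also have "\<dots> = (\<Sum>u\<in>wordA ` ?S. X u * g u t)"
    by (rule sum.reindex[symmetric, unfolded comp_def]) (auto intro: inj_onI wordA_inj)
  also have "wordA ` ?S = suppH X"
  proof
    show "wordA ` ?S \<subseteq> suppH X" using cX_nz_iff[OF assms(1)] by (auto simp: suppH_def)
    show "suppH X \<subseteq> wordA ` ?S"
    proof
      fix u assume u: "u \<in> suppH X"
      then have "isA u" using assms(1) by (auto simp: CAp_def suppH_def)
      then obtain \<alpha> where "wordA \<alpha> = u" using isA_wordA_ex by blast
      then show "u \<in> wordA ` ?S" using u cX_nz_iff[OF assms(1), of \<alpha>] by (auto simp: suppH_def)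
    qed
  qed
  finally show "linA f X t = lin g X t" by (simp add: lin_def)
qed


lemma fin_powH[simp]: "fin x \<Longrightarrow> fin (powH x n)" by (induction n) auto

lemma powH_snoc: "fin x \<Longrightarrow> powH x (Suc n) = concH (powH x n) x"
proof (induction n)
  case 0 then show ?case by (simp add: eH_def[symmetric])
next
  case (Suc n)
  have "powH x (Suc (Suc n)) = concH x (concH (powH x n) x)" using Suc by simp
  also have "\<dots> = concH (powH x (Suc n)) x" using Suc.prems by (simp add: concH_assoc)
  finally show ?case .
qed

lemma rhoW_reps: "rhoW (replicate k La) = powH (rhoL La) k"
proof (induction k)
  case 0 then show ?case by (simp add: eH_def)
next
  case (Suc k)
  have "rhoW (replicate (Suc k) La) = rhoW (replicate k La @ [La])" by (simp add: replicate_append_same)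
  also have "\<dots> = concH (rhoL La) (powH (rhoL La) k)" by (simp add: rhoW_snoc Suc)
  finally show ?case by simp
qed

definition psiLp :: "nat \<Rightarrow> H" where
  "psiLp k = concH (monoH [Lb]) (rhoW (replicate k La))"

lemma fin_psiLp[simp]: "fin (psiLp k)" by (simp add: psiLp_def)

lemma psiL_eq: "psiL k = scaleH (hbar ^ (if k = 0 then 1 else 0)) (psiLp k)"
proof (cases "k = 0")
  case True
  then show ?thesis by (simp add: psiL_def embA_def psiLp_def wordA_def)
next
  case False
  then show ?thesis by (simp add: psiL_def psiLp_def rhoW_reps rhoL.simps(1))
qed

lemma fin_psiL[simp]: "fin (psiL k)" by (simp add: psiL_eq)

lemma psih_wordA_cons: "psih (wordA (k # \<beta>)) = concH (psih (wordA \<beta>)) (psiLp k)"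
proof (cases \<beta>)
  case Nil
  then show ?thesis by (simp add: psiLp_def rhoW_append)
next
  case (Cons k' \<beta>')
  have "psih (wordA (k # \<beta>)) = concH (monoH [Lb])
     (concH (concH (rhoW (replicate k' La @ wordA \<beta>')) (monoH [Lb])) (rhoW (replicate k La)))"
    using Cons by (simp add: rhoW_append)
  also have "\<dots> = concH (concH (monoH [Lb]) (rhoW (replicate k' La @ wordA \<beta>'))) (psiLp k)"
    by (simp add: psiLp_def concH_assoc)
  also have "\<dots> = concH (psih (wordA \<beta>)) (psiLp k)" using Cons by simp
  finally show ?thesis .
qed

lemma fin_foldr: "(\<And>x. x \<in> set xs \<Longrightarrow> fin x) \<Longrightarrow> fin y \<Longrightarrow> fin (foldr concH xs y)"
  by (induction xs) auto

lemma foldr_conc: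
  "(\<And>x. x \<in> set xs \<Longrightarrow> fin x) \<Longrightarrow> fin y \<Longrightarrow> foldr concH xs y = concH (foldr concH xs (monoH [])) y"
proof (induction xs)
  case Nil then show ?case by (simp add: eH_def[symmetric])
next
  case (Cons x xs)
  have f: "fin (foldr concH xs (monoH []))" using Cons.prems by (intro fin_foldr) auto
  show ?case using Cons f by (simp add: concH_assoc)
qed

lemma psiW_cons: "psiW (k # \<beta>) = concH (psiW \<beta>) (psiL k)"
proof -
  have "psiW (k # \<beta>) = foldr concH (map psiL (rev \<beta>)) (concH (psiL k) (monoH []))"
    by (simp add: psiW_def)
  also have "\<dots> = foldr concH (map psiL (rev \<beta>)) (psiL k)" by (simp add: eH_def[symmetric])
  also have "\<dots> = concH (psiW \<beta>) (psiL k)"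
    unfolding psiW_def by (rule foldr_conc) auto
  finally show ?thesis .
qed

lemma fin_psiW[simp]: "fin (psiW \<beta>)"
  unfolding psiW_def by (rule fin_foldr) auto

lemma nz_Cons[simp]: "nz (k # \<beta>) = (if k = 0 then Suc (nz \<beta>) else nz \<beta>)" by (simp add: nz_def)
lemma nz_Nil[simp]: "nz [] = 0" by (simp add: nz_def)

lemma psiW_eq: "psiW \<beta> = scaleH (hbar ^ nz \<beta>) (psih (wordA \<beta>))"
proof (induction \<beta>)
  case Nil then show ?case by (simp add: psiW_def eH_def)
next
  case (Cons k \<beta>)
  have "psiW (k # \<beta>) = concH (scaleH (hbar ^ nz \<beta>) (psih (wordA \<beta>)))
      (scaleH (hbar ^ (if k = 0 then 1 else 0)) (psiLp k))"
    by (simp add: psiW_cons Cons psiL_eq del: psih.simps)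
  also have "\<dots> = scaleH (hbar ^ nz (k # \<beta>)) (psih (wordA (k # \<beta>)))"
    by (simp add: concH_scale1 concH_scale2 psih_wordA_cons mult.commute del: psih.simps wordA_Cons)
  finally show ?case .
qed

definition CApp :: "H \<Rightarrow> bool" where
  "CApp X \<longleftrightarrow> fin X \<and> (\<forall>u. X u \<noteq> 0 \<longrightarrow> isA u \<and> u \<noteq> []) \<and>
     (\<forall>u. hbar ^ (zc u - (if u \<noteq> [] \<and> last u = Lb then 1 else 0)) dvd X u)"

lemma CApp_app: "CApp X \<Longrightarrow> CAp (appH X La)"
  unfolding CAp_def
proof (intro conjI allI impI)
  assume a: "CApp X"
  then show "fin (appH X La)" by (simp add: CApp_def)
  fix t
  show "appH X La t \<noteq> 0 \<Longrightarrow> isA t"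
  proof -
    assume "appH X La t \<noteq> 0"
    then obtain t' where "t = t' @ [La]" "X t' \<noteq> 0" using appH_nz by blast
    then show "isA t" using a by (auto simp: CApp_def isA_snoc)
  qed
  show "hbar ^ zc t dvd appH X La t"
  proof (cases "t \<noteq> [] \<and> last t = La")
    case True
    then obtain t' where t: "t = t' @ [La]" by (metis append_butlast_last_id)
    have d: "hbar ^ (zc t' - (if t' \<noteq> [] \<and> last t' = Lb then 1 else 0)) dvd X t'"
      using a by (simp add: CApp_def)
    have e1: "zc t = zc t' - (if t' \<noteq> [] \<and> last t' = Lb then 1 else 0)"
      using t zc_snoc_a[of t'] by (auto split: if_splits)
    have e2: "appH X La t = X t'" using t by (simp add: appH_apply)
    show ?thesis unfolding e1 e2 by (rule d)
  next
    case False then show ?thesis by (auto simp: appH_apply)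
  qed
qed

lemma CApp_scale: "CApp X \<Longrightarrow> CAp (scaleH hbar X)"
  unfolding CAp_def
proof (intro conjI allI impI)
  assume a: "CApp X"
  then show "fin (scaleH hbar X)" by (simp add: CApp_def)
  fix t
  show "scaleH hbar X t \<noteq> 0 \<Longrightarrow> isA t" using a by (auto simp: CApp_def scaleH_def)
  have "hbar ^ (zc t - (if t \<noteq> [] \<and> last t = Lb then 1 else 0)) dvd hbar ^ 0 * X t"
    using a by (simp add: CApp_def)
  then have "hbar ^ zc t dvd hbar ^ 1 * X t" by (rule Dgen) (use zc_pos[of t] in auto)
  then show "hbar ^ zc t dvd scaleH hbar X t" by (simp add: scaleH_def)
qed

lemma CAp_CApp: "CAp X \<Longrightarrow> X [] = 0 \<Longrightarrow> CApp X"
  unfolding CApp_def CAp_def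
  by (auto intro: D_left[where m = "zc _"])

lemma CApp_step:
  assumes "CApp X"
  shows "CAp (- appH X La - scaleH hbar X) \<and> CApp (- appH X La - scaleH hbar X)"
proof -
  have c: "CAp (- appH X La - scaleH hbar X)"
    using assms by (intro CAp_minus CAp_uminus CApp_app CApp_scale)
  have "X [] = 0" using assms by (auto simp: CApp_def)
  then have "(- appH X La - scaleH hbar X) [] = 0" by (simp add: appH_apply scaleH_def)
  then show ?thesis using c CAp_CApp by blast
qed

definition Qn :: "nat \<Rightarrow> H" where "Qn n = concH (monoH [Lb]) (powH (rhoL La) n)"

lemma Qn_Suc: "Qn (Suc n) = - appH (Qn n) La - scaleH hbar (Qn n)"
proof -
  have "Qn (Suc n) = concH (Qn n) (rhoL La)"
    unfolding Qn_def by (simp add: powH_snoc concH_assoc del: powH.simps)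
  also have "\<dots> = - appH (Qn n) La - scaleH hbar (Qn n)" by (simp add: conc_ra Qn_def)
  finally show ?thesis .
qed

lemma CApp_Qn: "CApp (Qn n)"
proof (induction n)
  case 0
  have "Qn 0 = monoH [Lb]" by (simp add: Qn_def)
  moreover have "CApp (monoH [Lb])" unfolding CApp_def
    by (intro conjI allI impI fin_mono) (auto simp: monoH_def split: if_splits)
  ultimately show ?case by simp
next
  case (Suc n) then show ?case unfolding Qn_Suc using CApp_step by blast
qed

lemma CAp_psiL: "CAp (psiL k)"
proof (cases k)
  case 0 then show ?thesis by (simp add: psiL_def CAp_embA)
next
  case (Suc n)
  have "psiL k = Qn (Suc n)" using Suc by (simp add: psiL_def Qn_def rhoL.simps(1) del: powH.simps)
  then show ?thesis unfolding Qn_Suc using CApp_step[OF CApp_Qn[of n]] by (simp only:)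
qed

lemma CAp_foldr: "(\<And>x. x \<in> set xs \<Longrightarrow> CAp x) \<Longrightarrow> CAp y \<Longrightarrow> CAp (foldr concH xs y)"
  by (induction xs) (auto intro: CAp_concH)

lemma CAp_psiW: "CAp (psiW \<beta>)"
  unfolding psiW_def
  by (rule CAp_foldr) (auto simp: CAp_psiL CAp_eH[unfolded eH_def])


lemma Kw_reps:
  assumes "fin p" "fin q"
  shows "Kw (replicate k La @ w) p q = Kw w (concH p (monoH (replicate k La))) q"
  using assms
proof (induction k arbitrary: p)
  case 0 then show ?case by (simp add: eH_def[symmetric])
next
  case (Suc k)
  have "concH (appH p La) (monoH (replicate k La)) = concH p (monoH (replicate (Suc k) La))"
    using Suc.prems by (simp add: appH_concH concH_assoc)
  then show ?case using Suc by simp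
qed

lemma sumK:
  assumes "fin p"
  shows "(\<Sum>i<length \<alpha>. shH (concH p (monoH (wordA (take i \<alpha>)))) (psih (wordA (drop i \<alpha>))) t)
     = Kw (wordA \<alpha>) p (monoH [Lb]) t"
  using assms
proof (induction \<alpha> arbitrary: p)
  case Nil then show ?case by simp
next
  case (Cons k \<beta>)
  define p' where "p' = concH p (monoH (Lb # replicate k La))"
  have fp': "fin p'" using Cons.prems by (simp add: p'_def)
  have g: "\<And>i. concH p (monoH (wordA (take (Suc i) (k # \<beta>)))) = concH p' (monoH (wordA (take i \<beta>)))"
    using Cons.prems by (simp add: p'_def concH_assoc)
  define G where "G i = shH (concH p (monoH (wordA (take i (k # \<beta>))))) (psih (wordA (drop i (k # \<beta>)))) t" for i
  have "(\<Sum>i<length (k # \<beta>). G i) = G 0 + (\<Sum>i<length \<beta>. G (Suc i))"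
    by (simp only: length_Cons sum.lessThan_Suc_shift)
  moreover have "G 0 = shH p (psih (wordA (k # \<beta>))) t"
    using Cons.prems by (simp add: G_def eH_def[symmetric] del: wordA_Cons psih.simps)
  moreover have "\<And>i. G (Suc i) = shH (concH p' (monoH (wordA (take i \<beta>)))) (psih (wordA (drop i \<beta>))) t"
    unfolding G_def g[symmetric] by simp
  ultimately have "(\<Sum>i<length (k # \<beta>). shH (concH p (monoH (wordA (take i (k # \<beta>))))) (psih (wordA (drop i (k # \<beta>)))) t)
      = shH p (psih (wordA (k # \<beta>))) t
        + (\<Sum>i<length \<beta>. shH (concH p' (monoH (wordA (take i \<beta>)))) (psih (wordA (drop i \<beta>))) t)"
    unfolding G_def by simp
  also have "\<dots> = shH p (psih (wordA (k # \<beta>))) t + Kw (wordA \<beta>) p' (monoH [Lb]) t"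
    using Cons.IH[OF fp'] by simp
  also have "\<dots> = Kw (wordA (k # \<beta>)) p (monoH [Lb]) t"
  proof -
    have "concH (appH p Lb) (monoH (replicate k La)) = p'"
      using Cons.prems by (simp add: p'_def appH_concH concH_assoc)
    then show ?thesis using Cons.prems by (simp add: Kw_reps)
  qed
  finally show ?case .
qed

lemma nz_take_drop: "nz (take i \<alpha>) + nz (drop i \<alpha>) = nz \<alpha>"
  by (simp add: nz_def flip: filter_append length_append)

lemma embA_eq: "embA \<alpha> = scaleH (hbar ^ nz \<alpha>) (monoH (wordA \<alpha>))"
  by (simp add: embA_def nz_def)

lemma wSW_eq: "wSW \<alpha> = scaleH (hbar ^ nz \<alpha>) (Fw (wordA \<alpha>))"
proof
  fix t
  have trm: "\<And>i. shH (embA (take i \<alpha>)) (psiW (drop i \<alpha>)) t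
      = hbar ^ nz \<alpha> * shH (concH eH (monoH (wordA (take i \<alpha>)))) (psih (wordA (drop i \<alpha>))) t"
  proof -
    fix i
    have "shH (embA (take i \<alpha>)) (psiW (drop i \<alpha>))
       = scaleH (hbar ^ nz (take i \<alpha>) * hbar ^ nz (drop i \<alpha>))
           (shH (monoH (wordA (take i \<alpha>))) (psih (wordA (drop i \<alpha>))))"
      by (simp add: embA_eq psiW_eq shH_scale1 shH_scale2 mult.commute del: shH_mono_mono)
    also have "\<dots> = scaleH (hbar ^ nz \<alpha>) (shH (concH eH (monoH (wordA (take i \<alpha>)))) (psih (wordA (drop i \<alpha>))))"
      by (simp add: nz_take_drop flip: power_add del: shH_mono_mono)
    finally show "?thesis i" by (simp add: scaleH_def)
  qed
  have "wSW \<alpha> t = (\<Sum>i\<le>length \<alpha>. hbar ^ nz \<alpha> *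
       shH (concH eH (monoH (wordA (take i \<alpha>)))) (psih (wordA (drop i \<alpha>))) t)"
    by (simp add: wSW_def trm)
  also have "\<dots> = hbar ^ nz \<alpha> * ((\<Sum>i<length \<alpha>.
       shH (concH eH (monoH (wordA (take i \<alpha>)))) (psih (wordA (drop i \<alpha>))) t)
       + shH (concH eH (monoH (wordA \<alpha>))) eH t)"
    by (simp add: sum_distrib_left distrib_left lessThan_Suc_atMost[symmetric])
  also have "\<dots> = hbar ^ nz \<alpha> * (Kw (wordA \<alpha>) eH (monoH [Lb]) t + monoH (wordA \<alpha>) t)"
    using sumK[of eH \<alpha> t] by simp
  also have "\<dots> = scaleH (hbar ^ nz \<alpha>) (Fw (wordA \<alpha>)) t"
    by (simp add: Fw_def scaleH_def add.commute)
  finally show "wSW \<alpha> t = scaleH (hbar ^ nz \<alpha>) (Fw (wordA \<alpha>)) t" .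
qed

theorem proposition4p2:
  fixes q :: complex and M :: nat and w w' :: H
  assumes "0 < norm q" and "norm q < 1"
    and "w \<in> CA" and "w' \<in> CA"
    and "1 \<le> M"
  shows "ZqS q M (shH w w') = ZqS q M (concH w (psiSh w'))"
proof -
  have cw: "CAp w" and cw': "CAp w'" using assms(3,4) by (simp_all add: CA_iff)
  have fw: "fin w" and fw': "fin w'" using cw cw' by (simp_all add: CAp_def)
  have ps: "psiSh w' = lin psih w'"
    unfolding psiSh_def by (rule linA_lin[OF cw' psiW_eq])
  have cps: "CAp (psiSh w')"
    unfolding psiSh_def by (rule CAp_linA[OF cw' CAp_psiW])
  have c1: "CAp (shH w w')" using cw cw' by (rule CAp_shH)
  have c2: "CAp (concH w (psiSh w'))" using cw cps by (rule CAp_concH)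
  have "wS (shH w w') = lin Fw (shH w w')"
    unfolding wS_def by (rule linA_lin[OF c1 wSW_eq])
  also have "\<dots> = lin Fw (concH w (lin psih w'))"
  proof (rule core[OF fw fw'])
    fix v assume "v \<in> suppH w'"
    then show "isA v" using cw' by (auto simp: CAp_def suppH_def)
  qed
  also have "\<dots> = wS (concH w (psiSh w'))"
    unfolding ps[symmetric] wS_def by (rule linA_lin[OF c2 wSW_eq, symmetric])
  finally show ?thesis by (simp add: ZqS_def)
qed


end
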